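(* Let $G$ be a recursively presented group. Then for every finite generating set $S$ of $G$, the skeleton subshift $X_{G,S}$ is effective.
   Context: $G$ is recursively presented if $G\cong\mathbb{F}_S/\langle\langle R\rangle\rangle$ for some finite set $S$ and recursively enumerable set $R$ of words. For a finite generating set $S$, the skeleton subshift $X_{G,S}\subseteq(S\cup S^{-1})^{\mathbb{Z}}$ is the set of bi-infinite sequences none of whose non-empty finite factors represents $1_G$. A subshift over a finite alphabet is a set of bi-infinite sequences avoiding all words of a set $\mathcal F$ of forbidden finite words; it is effective if $\mathcal F$ can be chosen to be a decidable language. *)

theory Defs
  imports "HOL-Algebra.Algebra" "HOL-Library.Nat_Bijection"
begin

datatype recf =
    Zero
  | Succ
  | Proj nat
  | Comp recf "recf list"
  | Prec recf recf
  | Minim recf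

inductive ev :: "recf \<Rightarrow> nat list \<Rightarrow> nat \<Rightarrow> bool" where
  ev_zero: "ev Zero xs 0"
| ev_succ: "ev Succ (x # xs) (Suc x)"
| ev_proj: "i < length xs \<Longrightarrow> ev (Proj i) xs (xs ! i)"
| ev_comp: "list_all2 (\<lambda>g z. ev g xs z) gs zs \<Longrightarrow> ev f zs y \<Longrightarrow> ev (Comp f gs) xs y"
| ev_prec0: "ev f xs y \<Longrightarrow> ev (Prec f g) (0 # xs) y"
| ev_precS: "ev (Prec f g) (n # xs) z \<Longrightarrow> ev g (z # n # xs) y \<Longrightarrow> ev (Prec f g) (Suc n # xs) y"
| ev_minim: "ev f (n # xs) 0 \<Longrightarrow> (\<forall>m<n. \<exists>z. ev f (m # xs) z \<and> z \<noteq> 0) \<Longrightarrow> ev (Minim f) xs n"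
monos list_all2_mono

definition decidable_set :: "nat set \<Rightarrow> bool" where
  "decidable_set A \<longleftrightarrow> (\<exists>f. \<forall>n. ev f [n] (if n \<in> A then 1 else 0))"

definition re_set :: "nat set \<Rightarrow> bool" where
  "re_set A \<longleftrightarrow> (\<exists>f. \<forall>n. n \<in> A \<longleftrightarrow> (\<exists>y. ev f [n] y))"

text \<open>A letter (s, True) stands for s, the letter (s, False) for s^{-1}.\<close>
type_synonym 'a word = "('a \<times> bool) list"

definition inv_letter :: "'a \<times> bool \<Rightarrow> 'a \<times> bool" where
  "inv_letter x = (fst x, \<not> snd x)"

definition word_inv :: "'a word \<Rightarrow> 'a word" where
  "word_inv w = rev (map inv_letter w)"

fun red_cons :: "'a \<times> bool \<Rightarrow> 'a word \<Rightarrow> 'a word" where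
  "red_cons x [] = [x]"
| "red_cons x (y # ys) = (if y = inv_letter x then ys else x # y # ys)"

definition reduce :: "'a word \<Rightarrow> 'a word" where
  "reduce w = foldr red_cons w []"

definition reduced :: "'a word \<Rightarrow> bool" where
  "reduced w \<longleftrightarrow> (\<forall>i. Suc i < length w \<longrightarrow> w ! Suc i \<noteq> inv_letter (w ! i))"

definition free_group :: "'a set \<Rightarrow> 'a word monoid" where
  "free_group S = \<lparr>carrier = {w. set w \<subseteq> S \<times> UNIV \<and> reduced w},
                   monoid.mult = (\<lambda>u v. reduce (u @ v)), one = []\<rparr>"

definition normal_closure_rel :: "'a set \<Rightarrow> 'a word set \<Rightarrow> 'a word set" where
  "normal_closure_rel S R =
     generate (free_group S)
       {reduce (g @ r @ word_inv g) | g r. g \<in> carrier (free_group S) \<and> r \<in> R}"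

definition letter_code :: "nat \<times> bool \<Rightarrow> nat" where
  "letter_code x = prod_encode (fst x, of_bool (snd x))"

definition word_code :: "nat word \<Rightarrow> nat" where
  "word_code w = list_encode (map letter_code w)"

definition recursively_presented :: "('g, 'b) monoid_scheme \<Rightarrow> bool" where
  "recursively_presented G \<longleftrightarrow>
     (\<exists>(S :: nat set) R. finite S \<and> R \<subseteq> lists (S \<times> UNIV) \<and> re_set (word_code ` R) \<and>
        is_iso G (FactGroup (free_group S) (normal_closure_rel S R)))"

definition factor :: "(int \<Rightarrow> 'a) \<Rightarrow> int \<Rightarrow> nat \<Rightarrow> 'a list" where
  "factor x i n = map (\<lambda>k. x (i + int k)) [0..<n]"

definition full_shift :: "'a set \<Rightarrow> (int \<Rightarrow> 'a) set" where
  "full_shift A = {x. \<forall>i. x i \<in> A}"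

definition shift_of :: "'a set \<Rightarrow> 'a list set \<Rightarrow> (int \<Rightarrow> 'a) set" where
  "shift_of A F = {x \<in> full_shift A. \<forall>i n. factor x i n \<notin> F}"

text \<open>Effective subshift over a finite alphabet A: X = X_F with F a decidable language,
  decidability being measured through an (arbitrary) injective coding of the finite alphabet by naturals.\<close>
definition effective_subshift :: "'a set \<Rightarrow> (int \<Rightarrow> 'a) set \<Rightarrow> bool" where
  "effective_subshift Alph Y \<longleftrightarrow>
     (\<exists>Forb code. Forb \<subseteq> lists Alph \<and> inj_on code Alph \<and>
        decidable_set ((\<lambda>w. list_encode (map code w)) ` Forb) \<and> Y = shift_of Alph Forb)"

definition letter_eval :: "('g, 'b) monoid_scheme \<Rightarrow> 'g \<times> bool \<Rightarrow> 'g" where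
  "letter_eval G x = (if snd x then fst x else inv\<^bsub>G\<^esub> (fst x))"

definition word_eval :: "('g, 'b) monoid_scheme \<Rightarrow> 'g word \<Rightarrow> 'g" where
  "word_eval G w = foldr (\<lambda>x y. letter_eval G x \<otimes>\<^bsub>G\<^esub> y) w \<one>\<^bsub>G\<^esub>"

definition skeleton :: "('g, 'b) monoid_scheme \<Rightarrow> 'g set \<Rightarrow> (int \<Rightarrow> 'g \<times> bool) set" where
  "skeleton G S = {x \<in> full_shift (S \<times> UNIV).
                     \<forall>i n. n > 0 \<longrightarrow> word_eval G (factor x i n) \<noteq> \<one>\<^bsub>G\<^esub>}"

end

theory Submission
  imports Defs
begin

section \<open>Basic recursive programs\<close>

definition rec1 :: "(nat \<Rightarrow> nat) \<Rightarrow> bool" where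
  "rec1 F \<longleftrightarrow> (\<exists>f. \<forall>n. ev f [n] (F n))"

definition rec2 :: "(nat \<Rightarrow> nat \<Rightarrow> nat) \<Rightarrow> bool" where
  "rec2 F \<longleftrightarrow> (\<exists>f. \<forall>a b. ev f [a, b] (F a b))"

lemma ev_comp1: "ev g xs z \<Longrightarrow> ev f [z] y \<Longrightarrow> ev (Comp f [g]) xs y"
  by (rule ev_comp[of _ _ "[z]"]) auto

lemma ev_comp2: "ev g1 xs z1 \<Longrightarrow> ev g2 xs z2 \<Longrightarrow> ev f [z1, z2] y \<Longrightarrow> ev (Comp f [g1, g2]) xs y"
  by (rule ev_comp[of _ _ "[z1, z2]"]) auto

lemma ev_proj0: "ev (Proj 0) (x # xs) x"
  using ev_proj[of 0 "x # xs"] by simp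

lemma ev_proj1: "ev (Proj 1) (x # y # xs) y"
  using ev_proj[of 1 "x # y # xs"] by simp

lemma ev_proj2: "ev (Proj 2) (x # y # z # xs) z"
  using ev_proj[of 2 "x # y # z # xs"] by simp

lemma rec1_id: "rec1 (\<lambda>n. n)"
  unfolding rec1_def using ev_proj0 by blast

lemma rec1_const: "rec1 (\<lambda>n. c)"
proof (induction c)
  case 0
  then show ?case unfolding rec1_def using ev_zero by blast
next
  case (Suc c)
  then obtain f where "\<forall>n. ev f [n] c" unfolding rec1_def by blast
  then have "\<forall>n. ev (Comp Succ [f]) [n] (Suc c)" using ev_comp1 ev_succ by blast
  then show ?case unfolding rec1_def by blast
qed

lemma rec1_comp: "rec1 F \<Longrightarrow> rec1 G \<Longrightarrow> rec1 (\<lambda>n. F (G n))"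
  unfolding rec1_def using ev_comp1 by blast

lemma rec2_comp: "rec2 H \<Longrightarrow> rec1 F \<Longrightarrow> rec1 G \<Longrightarrow> rec1 (\<lambda>n. H (F n) (G n))"
  unfolding rec1_def rec2_def using ev_comp2 by blast

lemma rec1_Suc: "rec1 F \<Longrightarrow> rec1 (\<lambda>n. Suc (F n))"
  unfolding rec1_def using ev_comp1 ev_succ by blast

definition "ADD = Prec (Proj 0) (Comp Succ [Proj 0])"

lemma ev_ADD: "ev ADD [a, b] (a + b)"
proof (induction a)
  case 0
  then show ?case unfolding ADD_def using ev_prec0[OF ev_proj0] by simp
next
  case (Suc a)
  have "ev (Comp Succ [Proj 0]) [a + b, a, b] (Suc (a + b))"
    by (rule ev_comp1[OF ev_proj0 ev_succ])
  then show ?case using ev_precS[OF Suc[unfolded ADD_def]] unfolding ADD_def by simp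
qed

lemma rec2_add: "rec2 (+)"
  unfolding rec2_def using ev_ADD by blast

definition "MULT = Prec Zero (Comp ADD [Proj 0, Proj 2])"

lemma ev_MULT: "ev MULT [a, b] (a * b)"
proof (induction a)
  case 0
  then show ?case unfolding MULT_def using ev_prec0[OF ev_zero] by simp
next
  case (Suc a)
  have "ev (Comp ADD [Proj 0, Proj 2]) [a * b, a, b] (a * b + b)"
    by (rule ev_comp2[OF ev_proj0 ev_proj2 ev_ADD])
  then show ?case using ev_precS[OF Suc[unfolded MULT_def]] unfolding MULT_def
    by (simp add: add.commute)
qed

lemma rec2_mult: "rec2 (*)"
  unfolding rec2_def using ev_MULT by blast

definition "PRED = Prec Zero (Proj 1)"

lemma ev_PRED0: "ev PRED [0] 0"
  unfolding PRED_def by (rule ev_prec0[OF ev_zero])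

lemma ev_PRED: "ev PRED [n] (n - 1)"
proof (induction n)
  case 0 then show ?case using ev_PRED0 by simp
next
  case (Suc n)
  show ?case unfolding PRED_def
    using ev_precS[OF Suc[unfolded PRED_def] ev_proj1] by simp
qed

definition "SUBR = Prec (Proj 0) (Comp PRED [Proj 0])"

lemma ev_SUBR: "ev SUBR [b, a] (a - b)"
proof (induction b)
  case 0
  then show ?case unfolding SUBR_def using ev_prec0[OF ev_proj0] by simp
next
  case (Suc b)
  have "ev (Comp PRED [Proj 0]) [a - b, b, a] (a - b - 1)"
    by (rule ev_comp1[OF ev_proj0 ev_PRED])
  then have "ev (Comp PRED [Proj 0]) [a - b, b, a] (a - Suc b)" by simp
  from ev_precS[OF Suc[unfolded SUBR_def] this[folded SUBR_def]] show ?case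
    unfolding SUBR_def .
qed

definition "SUB = Comp SUBR [Proj 1, Proj 0]"

lemma ev_SUB: "ev SUB [a, b] (a - b)"
  unfolding SUB_def by (rule ev_comp2[OF ev_proj1 ev_proj0 ev_SUBR])

lemma rec2_sub: "rec2 (-)"
  unfolding rec2_def using ev_SUB by blast

definition "TRI = Prec Zero (Comp ADD [Proj 0, Comp Succ [Proj 1]])"

lemma ev_TRI: "ev TRI [n] (triangle n)"
proof (induction n)
  case 0
  then show ?case unfolding TRI_def using ev_prec0[OF ev_zero] by simp
next
  case (Suc n)
  have "ev (Comp ADD [Proj 0, Comp Succ [Proj 1]]) [triangle n, n] (triangle n + Suc n)"
    by (rule ev_comp2[OF ev_proj0 ev_comp1[OF ev_proj1 ev_succ] ev_ADD])
  then show ?case using ev_precS[OF Suc[unfolded TRI_def]] unfolding TRI_def by simp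
qed

definition "PE = Comp ADD [Comp TRI [ADD], Proj 0]"

lemma ev_PE: "ev PE [a, b] (prod_encode (a, b))"
  unfolding PE_def prod_encode_def
  using ev_comp2[OF ev_comp1[OF ev_ADD ev_TRI] ev_proj0 ev_ADD] by simp

lemma rec2_pe: "rec2 (\<lambda>a b. prod_encode (a, b))"
  unfolding rec2_def using ev_PE by blast

definition "DIAGP = Comp SUB [Comp Succ [Proj 1], Comp TRI [Comp Succ [Proj 0]]]"

lemma ev_DIAGP: "ev DIAGP [s, m] (Suc m - triangle (Suc s))"
  unfolding DIAGP_def
  by (rule ev_comp2[OF ev_comp1[OF ev_proj1 ev_succ] ev_comp1[OF ev_comp1[OF ev_proj0 ev_succ] ev_TRI] ev_SUB])

definition diag :: "nat \<Rightarrow> nat" where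
  "diag m = (LEAST s. m < triangle (Suc s))"

lemma triangle_ge: "n \<le> triangle n"
  by (induction n) auto

lemma diag_ex: "m < triangle (Suc m)"
  using triangle_ge[of m] by simp

lemma diag_props: "m < triangle (Suc (diag m))" "\<And>s. s < diag m \<Longrightarrow> \<not> m < triangle (Suc s)"
  unfolding diag_def using diag_ex LeastI not_less_Least by metis+

definition "DIAG = Minim DIAGP"

lemma ev_DIAG: "ev DIAG [m] (diag m)"
  unfolding DIAG_def
proof (rule ev_minim)
  show "ev DIAGP [diag m, m] 0" using ev_DIAGP[of "diag m" m] diag_props(1)[of m] by simp
  show "\<forall>k<diag m. \<exists>z. ev DIAGP [k, m] z \<and> z \<noteq> 0"
  proof (intro allI impI)
    fix k assume "k < diag m"
    then have "Suc m - triangle (Suc k) \<noteq> 0" using diag_props(2)[of k m] by simp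
    then show "\<exists>z. ev DIAGP [k, m] z \<and> z \<noteq> 0" using ev_DIAGP[of k m] by blast
  qed
qed

lemma diag_lower: "triangle (diag m) \<le> m"
proof (cases "diag m")
  case 0 then show ?thesis by simp
next
  case (Suc s)
  then have "s < diag m" by simp
  then show ?thesis using diag_props(2)[of s m] Suc by simp
qed

lemma prod_decode_diag:
  "prod_decode m = (m - triangle (diag m), diag m - (m - triangle (diag m)))"
proof -
  let ?s = "diag m" let ?a = "m - triangle ?s"
  have l: "triangle ?s \<le> m" by (rule diag_lower)
  have u: "m < triangle ?s + Suc ?s" using diag_props(1)[of m] by simp
  have "prod_encode (?a, ?s - ?a) = m"
    unfolding prod_encode_def using l u by simp
  then show ?thesis by (metis prod_encode_inverse)
qed

definition "PFST = Comp SUB [Proj 0, Comp TRI [DIAG]]"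
definition "PSND = Comp SUB [DIAG, PFST]"

lemma ev_PFST: "ev PFST [m] (fst (prod_decode m))"
  unfolding PFST_def prod_decode_diag
  using ev_comp2[OF ev_proj0 ev_comp1[OF ev_DIAG ev_TRI] ev_SUB] by simp

lemma ev_PSND: "ev PSND [m] (snd (prod_decode m))"
  unfolding PSND_def
  using ev_comp2[OF ev_DIAG ev_PFST ev_SUB] unfolding prod_decode_diag by simp

abbreviation "pfst n \<equiv> fst (prod_decode n)"
abbreviation "psnd n \<equiv> snd (prod_decode n)"

lemma rec1_pfst: "rec1 F \<Longrightarrow> rec1 (\<lambda>n. pfst (F n))"
  using rec1_comp[of "\<lambda>m. pfst m"] ev_PFST unfolding rec1_def by blast

lemma rec1_psnd: "rec1 F \<Longrightarrow> rec1 (\<lambda>n. psnd (F n))"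
  using rec1_comp[of "\<lambda>m. psnd m"] ev_PSND unfolding rec1_def by blast

lemma rec2_iter:
  assumes "rec1 F" shows "rec2 (\<lambda>k x. (F ^^ k) x)"
proof -
  obtain f where f: "\<forall>n. ev f [n] (F n)" using assms unfolding rec1_def by blast
  have "ev (Prec (Proj 0) (Comp f [Proj 0])) [k, x] ((F ^^ k) x)" for k x
  proof (induction k)
    case 0 then show ?case using ev_prec0[OF ev_proj0] by simp
  next
    case (Suc k)
    have "ev (Comp f [Proj 0]) [(F ^^ k) x, k, x] (F ((F ^^ k) x))"
      using ev_comp1[OF ev_proj0] f by blast
    then show ?case using ev_precS[OF Suc] by simp
  qed
  then show ?thesis unfolding rec2_def by blast
qed


lemma rf_id: "rec1 (\<lambda>n. n)" by (rule rec1_id)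
lemma rf_const: "rec1 (\<lambda>n. c)" by (rule rec1_const)
lemma rf_add: "rec1 A \<Longrightarrow> rec1 B \<Longrightarrow> rec1 (\<lambda>n. A n + B n)"
  using rec2_comp[OF rec2_add] .
lemma rf_sub: "rec1 A \<Longrightarrow> rec1 B \<Longrightarrow> rec1 (\<lambda>n. A n - B n)"
  using rec2_comp[OF rec2_sub] .
lemma rf_mult: "rec1 A \<Longrightarrow> rec1 B \<Longrightarrow> rec1 (\<lambda>n. A n * B n)"
  using rec2_comp[OF rec2_mult] .
lemma rf_pe: "rec1 A \<Longrightarrow> rec1 B \<Longrightarrow> rec1 (\<lambda>n. prod_encode (A n, B n))"
  using rec2_comp[OF rec2_pe] .
lemma rf_pfst: "rec1 F \<Longrightarrow> rec1 (\<lambda>n. pfst (F n))" by (rule rec1_pfst)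
lemma rf_psnd: "rec1 F \<Longrightarrow> rec1 (\<lambda>n. psnd (F n))" by (rule rec1_psnd)
lemma rf_Suc: "rec1 F \<Longrightarrow> rec1 (\<lambda>n. Suc (F n))" by (rule rec1_Suc)
lemma rf_iter: "rec1 F \<Longrightarrow> rec1 Kf \<Longrightarrow> rec1 Xf \<Longrightarrow> rec1 (\<lambda>n. (F ^^ Kf n) (Xf n))"
  using rec2_comp[OF rec2_iter] .

lemma rf_comp: "rec1 F \<Longrightarrow> rec1 G \<Longrightarrow> rec1 (\<lambda>n. F (G n))" by (rule rec1_comp)

definition rp :: "(nat \<Rightarrow> bool) \<Rightarrow> bool" where
  "rp P \<longleftrightarrow> rec1 (\<lambda>n. if P n then 1 else 0)"

lemma rf_if: assumes "rp P" "rec1 A" "rec1 B" shows "rec1 (\<lambda>n. if P n then A n else B n)"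
proof -
  have "rec1 (\<lambda>n. A n * (if P n then 1 else 0) + B n * (1 - (if P n then 1 else 0)))"
    using assms unfolding rp_def by (intro rf_add rf_mult rf_sub rf_const)
  then show ?thesis by (simp add: if_distrib cong: if_cong)
qed

lemma rp_comp: "rp P \<Longrightarrow> rec1 G \<Longrightarrow> rp (\<lambda>n. P (G n))"
  unfolding rp_def using rec1_comp[of "\<lambda>n. if P n then 1 else 0" G] by simp

lemma rp_ne0: "rec1 A \<Longrightarrow> rp (\<lambda>n. A n \<noteq> 0)"
proof -
  assume "rec1 A"
  then have "rec1 (\<lambda>n. 1 - (1 - A n))" by (intro rf_sub rf_const)
  moreover have "(\<lambda>n. 1 - (1 - A n)) = (\<lambda>n. if A n \<noteq> 0 then 1 else 0)" by auto
  ultimately show ?thesis unfolding rp_def by simp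
qed

lemma rp_eq: "rec1 A \<Longrightarrow> rec1 B \<Longrightarrow> rp (\<lambda>n. A n = B n)"
proof -
  assume "rec1 A" "rec1 B"
  then have "rec1 (\<lambda>n. 1 - ((A n - B n) + (B n - A n)))" by (intro rf_sub rf_add rf_const)
  moreover have "(\<lambda>n. 1 - ((A n - B n) + (B n - A n))) = (\<lambda>n. if A n = B n then 1 else 0)" by auto
  ultimately show ?thesis unfolding rp_def by simp
qed

lemma rp_less: "rec1 A \<Longrightarrow> rec1 B \<Longrightarrow> rp (\<lambda>n. A n < B n)"
proof -
  assume "rec1 A" "rec1 B"
  then have "rp (\<lambda>n. B n - A n \<noteq> 0)" by (intro rp_ne0 rf_sub)
  moreover have "(\<lambda>n. B n - A n \<noteq> 0) = (\<lambda>n. A n < B n)" by auto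
  ultimately show ?thesis by simp
qed

lemma rp_le: "rec1 A \<Longrightarrow> rec1 B \<Longrightarrow> rp (\<lambda>n. A n \<le> B n)"
proof -
  assume "rec1 A" "rec1 B"
  then have "rp (\<lambda>n. A n < Suc (B n))" by (intro rp_less rf_Suc)
  then show ?thesis by (simp add: less_Suc_eq_le)
qed

lemma rp_not: "rp P \<Longrightarrow> rp (\<lambda>n. \<not> P n)"
proof -
  assume "rp P"
  then have "rec1 (\<lambda>n. if P n then 0 else 1)" by (intro rf_if rf_const)
  moreover have "(\<lambda>n. if P n then 0 else 1) = (\<lambda>n. if \<not> P n then 1 else (0::nat))" by auto
  ultimately show ?thesis unfolding rp_def by simp
qed

lemma rp_conj: "rp P \<Longrightarrow> rp Q \<Longrightarrow> rp (\<lambda>n. P n \<and> Q n)"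
proof -
  assume "rp P" "rp Q"
  then have "rec1 (\<lambda>n. if P n then (if Q n then 1 else 0) else 0)" by (intro rf_if rf_const)
  moreover have "(\<lambda>n. if P n then (if Q n then 1 else 0) else 0) = (\<lambda>n. if P n \<and> Q n then 1 else (0::nat))" by auto
  ultimately show ?thesis unfolding rp_def by simp
qed

lemma rp_disj: "rp P \<Longrightarrow> rp Q \<Longrightarrow> rp (\<lambda>n. P n \<or> Q n)"
proof -
  assume "rp P" "rp Q"
  then have "rp (\<lambda>n. \<not> (\<not> P n \<and> \<not> Q n))" by (intro rp_not rp_conj)
  then show ?thesis by simp
qed

lemma rp_imp: "rp P \<Longrightarrow> rp Q \<Longrightarrow> rp (\<lambda>n. P n \<longrightarrow> Q n)"
proof -
  assume "rp P" "rp Q"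
  then have "rp (\<lambda>n. \<not> P n \<or> Q n)" by (intro rp_not rp_disj)
  then show ?thesis by simp
qed

lemma rp_const: "rp (\<lambda>n. b)"
  unfolding rp_def by (cases b) (simp_all add: rf_const)

lemma rp_decide: "rp P \<Longrightarrow> \<exists>f. \<forall>n. ev f [n] (if P n then 1 else 0)"
  unfolding rp_def rec1_def .

lemma prec_iter:
  fixes H :: "nat \<Rightarrow> nat \<Rightarrow> nat \<Rightarrow> nat"
  defines "step \<equiv> \<lambda>st. prod_encode (Suc (pfst st), prod_encode (H (pfst st) (pfst (psnd st)) (psnd (psnd st)), psnd (psnd st)))"
  shows "(step ^^ k) (prod_encode (0, prod_encode (a, n))) = prod_encode (k, prod_encode (rec_nat a (\<lambda>i acc. H i acc n) k, n))"
  by (induction k) (simp_all add: step_def)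

lemma rf_prec:
  assumes A: "rec1 A" and K: "rec1 K" and H: "rec1 (\<lambda>m. H (pfst m) (pfst (psnd m)) (psnd (psnd m)))"
  shows "rec1 (\<lambda>n. rec_nat (A n) (\<lambda>i acc. H i acc n) (K n))"
proof -
  define step where "step \<equiv> \<lambda>st. prod_encode (Suc (pfst st), prod_encode (H (pfst st) (pfst (psnd st)) (psnd (psnd st)), psnd (psnd st)))"
  have s: "rec1 step" unfolding step_def using H by (intro rf_pe rf_Suc rf_pfst rf_psnd rf_id)
  have "rec1 (\<lambda>n. pfst (psnd ((step ^^ K n) (prod_encode (0, prod_encode (A n, n))))))"
    using s A K by (intro rf_pfst rf_psnd rf_iter rf_pe rf_const rf_id)
  then show ?thesis unfolding step_def prec_iter by simp
qed

lemma rp_bex: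
  assumes P: "rp (\<lambda>m. P (pfst m) (psnd m))" and K: "rec1 K"
  shows "rp (\<lambda>n. \<exists>i<K n. P i n)"
proof -
  have P': "rp (\<lambda>m. P (pfst m) (psnd (psnd m)))"
    using rp_comp[OF P, of "\<lambda>m. prod_encode (pfst m, psnd (psnd m))"]
    by (simp add: rf_pe rf_pfst rf_psnd rf_id)
  have "rec1 (\<lambda>m. if pfst (psnd m) \<noteq> 0 \<or> P (pfst m) (psnd (psnd m)) then 1 else 0)"
    using P' by (intro rf_if rp_disj rp_ne0 rf_pfst rf_psnd rf_id rf_const)
  then have "rec1 (\<lambda>n. rec_nat 0 (\<lambda>i acc. if acc \<noteq> 0 \<or> P i n then 1 else 0) (K n))"
    using K by (intro rf_prec[where H="\<lambda>i acc n. if acc \<noteq> 0 \<or> P i n then 1 else 0"] rf_const) simp_all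
  moreover have eq: "rec_nat 0 (\<lambda>i acc. if acc \<noteq> 0 \<or> P i n then 1 else 0) k = (if \<exists>i<k. P i n then 1 else 0)" for k n
    by (induction k) (auto simp: less_Suc_eq)
  ultimately show ?thesis unfolding rp_def eq[symmetric] by blast
qed

lemma rp_ball:
  assumes P: "rp (\<lambda>m. P (pfst m) (psnd m))" and K: "rec1 K"
  shows "rp (\<lambda>n. \<forall>i<K n. P i n)"
proof -
  have "rp (\<lambda>n. \<not> (\<exists>i<K n. \<not> P i n))"
    by (intro rp_not rp_bex K P)
  then show ?thesis by simp
qed

lemma list_decode_Suc: "list_decode (Suc d) = pfst d # list_decode (psnd d)"
  by (simp split: prod.split)

lemma list_decode_length: "length (list_decode c) \<le> c"
proof (induction c rule: list_decode.induct)
  case 1 then show ?case by simp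
next
  case (2 n)
  have "psnd n \<le> n" by (metis le_prod_encode_2 prod.collapse prod_decode_inverse)
  moreover have "length (list_decode (psnd n)) \<le> psnd n" using 2 by (metis prod.collapse)
  ultimately show ?case by (auto split: prod.split)
qed

lemma fold_iter:
  fixes F :: "nat \<Rightarrow> nat \<Rightarrow> nat \<Rightarrow> nat"
  defines "step \<equiv> \<lambda>st. if pfst st = 0 then st else
      prod_encode (psnd (pfst st - 1), prod_encode (F (pfst (psnd st)) (pfst (pfst st - 1)) (psnd (psnd st)), psnd (psnd st)))"
  shows "length (list_decode c) \<le> k \<Longrightarrow>
    (step ^^ k) (prod_encode (c, prod_encode (a, n))) = prod_encode (0, prod_encode (foldl (\<lambda>acc x. F acc x n) a (list_decode c), n))"
proof (induction k arbitrary: c a)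
  case 0
  then have "c = 0" by (metis le_zero_eq length_0_conv list_decode_inverse list_encode.simps(1))
  then show ?case by simp
next
  case (Suc k)
  show ?case
  proof (cases c)
    case 0
    have fx: "step (prod_encode (0, y)) = prod_encode (0, y)" for y by (simp add: step_def)
    have "(step ^^ j) (prod_encode (0, prod_encode (a, n))) = prod_encode (0, prod_encode (a, n))" for j
      by (induction j) (simp_all add: fx)
    then show ?thesis using 0 fx by simp
  next
    case (Suc d)
    have "(step ^^ Suc k) (prod_encode (c, prod_encode (a, n))) =
        (step ^^ k) (step (prod_encode (c, prod_encode (a, n))))" by (simp add: funpow_swap1)
    also have "step (prod_encode (c, prod_encode (a, n))) = prod_encode (psnd d, prod_encode (F a (pfst d) n, n))"
      using Suc by (simp add: step_def)
    also have "(step ^^ k) \<dots> = prod_encode (0, prod_encode (foldl (\<lambda>acc x. F acc x n) (F a (pfst d) n) (list_decode (psnd d)), n))"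
    proof -
      have "length (list_decode c) \<le> Suc k" by (rule Suc.prems)
      then have "length (list_decode (psnd d)) \<le> k" unfolding Suc list_decode_Suc by simp
      then show ?thesis by (rule Suc.IH)
    qed
    finally have R: "(step ^^ Suc k) (prod_encode (c, prod_encode (a, n))) = prod_encode (0, prod_encode (foldl (\<lambda>acc x. F acc x n) (F a (pfst d) n) (list_decode (psnd d)), n))" .
    have "foldl (\<lambda>acc x. F acc x n) a (list_decode c) = foldl (\<lambda>acc x. F acc x n) (F a (pfst d) n) (list_decode (psnd d))"
      unfolding Suc list_decode_Suc by simp
    then show ?thesis using R by simp
  qed
qed

lemma rf_fold:
  assumes A: "rec1 A" and L: "rec1 L" and F: "rec1 (\<lambda>m. F (pfst m) (pfst (psnd m)) (psnd (psnd m)))"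
  shows "rec1 (\<lambda>n. foldl (\<lambda>acc x. F acc x n) (A n) (list_decode (L n)))"
proof -
  define step where "step \<equiv> \<lambda>st. if pfst st = 0 then st else
      prod_encode (psnd (pfst st - 1), prod_encode (F (pfst (psnd st)) (pfst (pfst st - 1)) (psnd (psnd st)), psnd (psnd st)))"
  have F': "rec1 (\<lambda>st. F (pfst (psnd st)) (pfst (pfst st - 1)) (psnd (psnd st)))"
    using rf_comp[OF F, of "\<lambda>st. prod_encode (pfst (psnd st), prod_encode (pfst (pfst st - 1), psnd (psnd st)))"]
    by (simp add: rf_pe rf_pfst rf_psnd rf_id rf_sub rf_const)
  have s: "rec1 step" unfolding step_def
    using F' by (intro rf_if rp_eq rf_pe rf_pfst rf_psnd rf_sub rf_id rf_const)
  have "rec1 (\<lambda>n. pfst (psnd ((step ^^ L n) (prod_encode (L n, prod_encode (A n, n))))))"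
    using s A L by (intro rf_pfst rf_psnd rf_iter rf_pe rf_id)
  then show ?thesis unfolding step_def fold_iter[OF list_decode_length] by simp
qed

lemma rf_table:
  assumes "finite A" shows "rec1 (\<lambda>n. if n \<in> A then f n else 0)"
  using assms
proof (induction A rule: finite_induct)
  case empty then show ?case by (simp add: rf_const)
next
  case (insert a A)
  have "rec1 (\<lambda>n. if n = a then f a else (if n \<in> A then f n else 0))"
    by (rule rf_if[OF rp_eq[OF rf_id rf_const] rf_const insert.IH])
  moreover have "(\<lambda>n. if n = a then f a else (if n \<in> A then f n else 0)) = (\<lambda>n. if n \<in> insert a A then f n else 0)"
    by auto
  ultimately show ?case by simp
qed

lemma rp_mem: "finite A \<Longrightarrow> rp (\<lambda>n. n \<in> A)"
  unfolding rp_def using rf_table[of A "\<lambda>_. 1"] by (simp cong: if_cong)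


section \<open>Fuel-bounded evaluation\<close>

definition msearch_st :: "nat \<Rightarrow> (nat \<Rightarrow> nat option) \<Rightarrow> nat option option" where
  "msearch_st t F = rec_nat (Some None) (\<lambda>i st. case st of Some None \<Rightarrow>
      (case F i of None \<Rightarrow> None | Some 0 \<Rightarrow> Some (Some i) | Some (Suc _) \<Rightarrow> Some None) | _ \<Rightarrow> st) t"

definition msearch :: "nat \<Rightarrow> (nat \<Rightarrow> nat option) \<Rightarrow> nat option" where
  "msearch t F = (case msearch_st t F of Some (Some i) \<Rightarrow> Some i | _ \<Rightarrow> None)"

fun evf :: "nat \<Rightarrow> recf \<Rightarrow> nat list \<Rightarrow> nat option" where
  "evf t Zero xs = Some 0"
| "evf t Succ xs = (case xs of [] \<Rightarrow> None | x # _ \<Rightarrow> Some (Suc x))"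
| "evf t (Proj i) xs = (if i < length xs then Some (xs ! i) else None)"
| "evf t (Comp f gs) xs = (case those (map (\<lambda>g. evf t g xs) gs) of None \<Rightarrow> None | Some zs \<Rightarrow> evf t f zs)"
| "evf t (Prec f g) xs = (case xs of [] \<Rightarrow> None | n # ys \<Rightarrow>
      rec_nat (evf t f ys) (\<lambda>m acc. case acc of None \<Rightarrow> None | Some z \<Rightarrow> evf t g (z # m # ys)) n)"
| "evf t (Minim f) xs = msearch t (\<lambda>i. evf t f (i # xs))"

lemma ms_char:
  "(msearch_st t F = Some None \<longleftrightarrow> (\<forall>j<t. \<exists>z. F j = Some (Suc z))) \<and>
   (msearch_st t F = Some (Some i) \<longleftrightarrow> (i < t \<and> F i = Some 0 \<and> (\<forall>j<i. \<exists>z. F j = Some (Suc z))))"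
proof (induction t arbitrary: i)
  case 0 then show ?case by (simp add: msearch_st_def)
next
  case (Suc t)
  have st: "msearch_st (Suc t) F = (case msearch_st t F of Some None \<Rightarrow>
      (case F t of None \<Rightarrow> None | Some 0 \<Rightarrow> Some (Some t) | Some (Suc _) \<Rightarrow> Some None) | _ \<Rightarrow> msearch_st t F)"
    by (simp add: msearch_st_def split: option.split)
  show ?case
  proof (cases "msearch_st t F")
    case None
    then have a: "\<not> (\<forall>j<t. \<exists>z. F j = Some (Suc z))" "\<And>i. \<not> (i < t \<and> F i = Some 0 \<and> (\<forall>j<i. \<exists>z. F j = Some (Suc z)))"
      using Suc.IH by auto
    have b: "\<not> (\<forall>j<Suc t. \<exists>z. F j = Some (Suc z))" using a(1) by (meson less_SucI)
    have c: "\<not> (i < Suc t \<and> F i = Some 0 \<and> (\<forall>j<i. \<exists>z. F j = Some (Suc z)))"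
    proof
      assume h: "i < Suc t \<and> F i = Some 0 \<and> (\<forall>j<i. \<exists>z. F j = Some (Suc z))"
      show False
      proof (cases "i < t")
        case True then show False using a(2)[of i] h by blast
      next
        case False then have "i = t" using h by simp
        then show False using a(1) h by blast
      qed
    qed
    show ?thesis using None st b c by simp
  next
    case (Some s)
    show ?thesis
    proof (cases s)
      case None
      then have all: "\<forall>j<t. \<exists>z. F j = Some (Suc z)" using Suc.IH Some by simp
      have nf: "\<not> (i < t \<and> F i = Some 0 \<and> (\<forall>j<i. \<exists>z. F j = Some (Suc z)))" for i
        using all by fastforce
      show ?thesis
      proof (cases "F t")
        case None2: None
        have "\<not> (\<forall>j<Suc t. \<exists>z. F j = Some (Suc z))" using None2 by auto
        moreover have "\<not> (i < Suc t \<and> F i = Some 0 \<and> (\<forall>j<i. \<exists>z. F j = Some (Suc z)))"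
          using nf[of i] None2 less_Suc_eq by auto
        ultimately show ?thesis using st Some None None2 by simp
      next
        case (Some v)
        show ?thesis
        proof (cases v)
          case 0
          have "\<not> (\<forall>j<Suc t. \<exists>z. F j = Some (Suc z))" using Some 0 by auto
          moreover have "(i < Suc t \<and> F i = Some 0 \<and> (\<forall>j<i. \<exists>z. F j = Some (Suc z))) \<longleftrightarrow> i = t"
            using nf[of i] Some 0 all less_Suc_eq by auto
          ultimately show ?thesis using st \<open>msearch_st t F = Some s\<close> None Some 0 by auto
        next
          case (Suc w)
          have "\<forall>j<Suc t. \<exists>z. F j = Some (Suc z)" using all Some Suc less_Suc_eq by auto
          moreover have "\<not> (i < Suc t \<and> F i = Some 0 \<and> (\<forall>j<i. \<exists>z. F j = Some (Suc z)))"
            using nf[of i] Some Suc less_Suc_eq by auto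
          ultimately show ?thesis using st \<open>msearch_st t F = Some s\<close> None Some Suc by auto
        qed
      qed
    next
      case (Some k)
      have "msearch_st t F = Some (Some k)" using \<open>msearch_st t F = Some s\<close> Some by simp
      then have k: "k < t \<and> F k = Some 0 \<and> (\<forall>j<k. \<exists>z. F j = Some (Suc z))"
        using conjunct2[OF Suc.IH[of k]] by blast
      have "\<not> (\<forall>j<Suc t. \<exists>z. F j = Some (Suc z))"
      proof
        assume "\<forall>j<Suc t. \<exists>z. F j = Some (Suc z)"
        then obtain z where "F k = Some (Suc z)" using k less_SucI by blast
        with k show False by simp
      qed
      moreover have "(i < Suc t \<and> F i = Some 0 \<and> (\<forall>j<i. \<exists>z. F j = Some (Suc z))) \<longleftrightarrow> i = k"
      proof
        assume h: "i < Suc t \<and> F i = Some 0 \<and> (\<forall>j<i. \<exists>z. F j = Some (Suc z))"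
        show "i = k"
        proof (rule ccontr)
          assume "i \<noteq> k"
          then have "i < k \<or> k < i" by arith
          then show False using h k by fastforce
        qed
      next
        assume "i = k" then show "i < Suc t \<and> F i = Some 0 \<and> (\<forall>j<i. \<exists>z. F j = Some (Suc z))"
          using k by simp
      qed
      ultimately show ?thesis using st \<open>msearch_st t F = Some s\<close> Some by auto
    qed
  qed
qed

lemma msearch_Some: "msearch t F = Some i \<longleftrightarrow> (i < t \<and> F i = Some 0 \<and> (\<forall>j<i. \<exists>z. F j = Some (Suc z)))"
  unfolding msearch_def using ms_char[of t F i]
  by (auto split: option.split)

lemma those_eq_Some: "those (map h gs) = Some zs \<longleftrightarrow> list_all2 (\<lambda>g z. h g = Some z) gs zs"
proof (induction gs arbitrary: zs)
  case Nil then show ?case by (cases zs) auto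
next
  case (Cons g gs)
  show ?case
  proof (cases "h g")
    case None then show ?thesis by (cases zs) simp_all
  next
    case (Some y)
    then have e: "those (map h (g # gs)) = map_option (Cons y) (those (map h gs))" by simp
    show ?thesis
    proof (cases zs)
      case Nil then show ?thesis using e by (cases "those (map h gs)") simp_all
    next
      case (Cons z zs')
      show ?thesis unfolding e Cons using Cons.IH[of zs'] Some
        by (cases "those (map h gs)") auto
    qed
  qed
qed

lemma evf_sound: "evf t f xs = Some y \<Longrightarrow> ev f xs y"
proof (induction t f xs arbitrary: y rule: evf.induct)
  case (1 t xs)
  from 1 have "y = 0" by simp
  then show ?case using ev_zero by simp
next
  case (2 t xs)
  from "2.prems" obtain x xs' where "xs = x # xs'" "y = Suc x" by (cases xs) simp_all
  then show ?case using ev_succ by simp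
next
  case (3 t i xs)
  from "3.prems" have "i < length xs" "y = xs ! i" by (simp_all split: if_splits)
  then show ?case using ev_proj by simp
next
  case (4 t f gs xs)
  obtain zs where zs: "those (map (\<lambda>g. evf t g xs) gs) = Some zs" "evf t f zs = Some y"
  proof (cases "those (map (\<lambda>g. evf t g xs) gs)")
    case None then show ?thesis using "4.prems" by simp
  next
    case (Some zs) then show ?thesis using "4.prems" that by simp
  qed
  have "list_all2 (\<lambda>g z. evf t g xs = Some z) gs zs" using those_eq_Some[of "\<lambda>g. evf t g xs" gs zs] zs(1) by simp
  then have L: "length gs = length zs" "\<And>i. i < length gs \<Longrightarrow> evf t (gs ! i) xs = Some (zs ! i)"
    by (simp_all add: list_all2_conv_all_nth)
  have "ev (gs ! i) xs (zs ! i)" if "i < length gs" for i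
    using "4.IH"(1)[OF nth_mem[OF that] L(2)[OF that]] .
  then have "list_all2 (\<lambda>g z. ev g xs z) gs zs"
    using L(1) by (simp add: list_all2_conv_all_nth)
  moreover have "ev f zs y" using "4.IH"(2)[OF zs(1)] zs(2) by blast
  ultimately show ?case by (rule ev_comp)
next
  case (5 t f g xs)
  from "5.prems" obtain n ys where xs: "xs = n # ys" by (cases xs) simp_all
  have "rec_nat (evf t f ys) (\<lambda>m acc. case acc of None \<Rightarrow> None | Some z \<Rightarrow> evf t g (z # m # ys)) k = Some y
      \<Longrightarrow> ev (Prec f g) (k # ys) y" for k y
  proof (induction k arbitrary: y)
    case 0
    then have "evf t f ys = Some y" by simp
    then have "ev f ys y" using "5.IH"(1)[OF xs] by blast
    then show ?case by (rule ev_prec0)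
  next
    case (Suc k)
    from Suc.prems obtain z where z: "rec_nat (evf t f ys) (\<lambda>m acc. case acc of None \<Rightarrow> None | Some z \<Rightarrow> evf t g (z # m # ys)) k = Some z"
      "evf t g (z # k # ys) = Some y"
      by (simp split: option.splits)
    show ?case using ev_precS[OF Suc.IH[OF z(1)] "5.IH"(2)[OF xs z(2)]] .
  qed
  then show ?case using "5.prems" xs by simp
next
  case (6 t f xs)
  from "6.prems" have h: "y < t \<and> evf t f (y # xs) = Some 0 \<and> (\<forall>j<y. \<exists>z. evf t f (j # xs) = Some (Suc z))"
    using msearch_Some by simp
  show ?case
  proof (rule ev_minim)
    show "ev f (y # xs) 0" using h "6.IH" by blast
    show "\<forall>m<y. \<exists>z. ev f (m # xs) z \<and> z \<noteq> 0" using h "6.IH" by blast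
  qed
qed

lemma fin_choice_bound:
  fixes n :: nat and P :: "nat \<Rightarrow> nat \<Rightarrow> bool"
  shows "(\<forall>m<n. \<exists>T. \<forall>t\<ge>T. P m t) \<Longrightarrow> \<exists>T. \<forall>t\<ge>T. \<forall>m<n. P m t"
proof (induction n)
  case 0 then show ?case by auto
next
  case (Suc n)
  then obtain T1 where T1: "\<forall>t\<ge>T1. \<forall>m<n. P m t" by auto
  obtain T2 where T2: "\<forall>t\<ge>T2. P n t" using Suc.prems by auto
  have "\<forall>t\<ge>max T1 T2. \<forall>m<Suc n. P m t" using T1 T2 less_Suc_eq by auto
  then show ?case by blast
qed

lemma list_all2_bound:
  fixes P :: "nat \<Rightarrow> 'a \<Rightarrow> 'b \<Rightarrow> bool"
  assumes "list_all2 (\<lambda>g z. \<exists>T. \<forall>t\<ge>T. P t g z) gs zs"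
  shows "\<exists>T. \<forall>t\<ge>T. list_all2 (P t) gs zs"
  using assms
proof (induction gs arbitrary: zs)
  case Nil then show ?case by auto
next
  case (Cons g gs)
  then obtain z zs' where zs: "zs = z # zs'" by (cases zs) auto
  from Cons.prems zs have h: "\<exists>T. \<forall>t\<ge>T. P t g z" "list_all2 (\<lambda>g z. \<exists>T. \<forall>t\<ge>T. P t g z) gs zs'" by simp_all
  from h(1) obtain T1 where "\<forall>t\<ge>T1. P t g z" by blast
  moreover from Cons.IH[OF h(2)] obtain T2 where "\<forall>t\<ge>T2. list_all2 (P t) gs zs'" by blast
  ultimately have "\<forall>t\<ge>T1. P t g z" "\<forall>t\<ge>T2. list_all2 (P t) gs zs'" by blast+
  then have "\<forall>t\<ge>max T1 T2. list_all2 (P t) (g # gs) zs" using zs by auto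
  then show ?case by blast
qed

lemma evf_complete: "ev f xs y \<Longrightarrow> \<exists>T. \<forall>t\<ge>T. evf t f xs = Some y"
proof (induction rule: ev.induct)
  case (ev_zero xs) then show ?case by simp
next
  case (ev_succ x xs) then show ?case by simp
next
  case (ev_proj i xs) then show ?case by simp
next
  case (ev_comp xs gs zs f y)
  have "list_all2 (\<lambda>g z. \<exists>T. \<forall>t\<ge>T. evf t g xs = Some z) gs zs"
    using ev_comp(1) by (rule list_all2_mono) auto
  then obtain T1 where T1: "\<forall>t\<ge>T1. list_all2 (\<lambda>g z. evf t g xs = Some z) gs zs"
    using list_all2_bound[where P="\<lambda>t g z. evf t g xs = Some z"] by blast
  obtain T2 where T2: "\<forall>t\<ge>T2. evf t f zs = Some y" using ev_comp by blast
  have "evf t (Comp f gs) xs = Some y" if "t \<ge> max T1 T2" for t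
  proof -
    have "those (map (\<lambda>g. evf t g xs) gs) = Some zs"
      using those_eq_Some[of "\<lambda>g. evf t g xs" gs zs] T1 that by simp
    then show ?thesis using T2 that by simp
  qed
  then show ?case by (intro exI[of _ "max T1 T2"]) blast
next
  case (ev_prec0 f xs y g) then show ?case by simp
next
  case (ev_precS f g n xs z y)
  then obtain T1 T2 where "\<forall>t\<ge>T1. evf t (Prec f g) (n # xs) = Some z" "\<forall>t\<ge>T2. evf t g (z # n # xs) = Some y"
    by blast
  then have "\<forall>t\<ge>max T1 T2. evf t (Prec f g) (Suc n # xs) = Some y" by auto
  then show ?case by blast
next
  case (ev_minim f n xs)
  obtain T0 where T0: "\<forall>t\<ge>T0. evf t f (n # xs) = Some 0" using ev_minim by blast
  have "\<forall>m<n. \<exists>T. \<forall>t\<ge>T. \<exists>z. evf t f (m # xs) = Some (Suc z)"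
  proof (intro allI impI)
    fix m assume "m < n"
    then obtain z where "\<exists>T. \<forall>t\<ge>T. evf t f (m # xs) = Some z" "z \<noteq> 0" using ev_minim by blast
    then show "\<exists>T. \<forall>t\<ge>T. \<exists>z. evf t f (m # xs) = Some (Suc z)" by (metis not0_implies_Suc)
  qed
  then obtain T1 where T1: "\<forall>t\<ge>T1. \<forall>m<n. \<exists>z. evf t f (m # xs) = Some (Suc z)"
    using fin_choice_bound[where P="\<lambda>m t. \<exists>z. evf t f (m # xs) = Some (Suc z)"] by blast
  have "\<forall>t\<ge>max (Suc n) (max T0 T1). evf t (Minim f) xs = Some n"
    using T0 T1 by (auto simp: msearch_Some)
  then show ?case by blast
qed


declare list_decode.simps(2)[simp del]
declare list_decode_Suc[simp]

definition enc_opt :: "nat option \<Rightarrow> nat" where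
  "enc_opt x = (case x of None \<Rightarrow> 0 | Some y \<Rightarrow> Suc y)"

lemma enc_opt_simps[simp]: "enc_opt None = 0" "enc_opt (Some y) = Suc y"
  by (simp_all add: enc_opt_def)

definition E :: "recf \<Rightarrow> nat \<Rightarrow> nat" where
  "E f m = enc_opt (evf (pfst m) f (list_decode (psnd m)))"

lemma E_pe: "E f (prod_encode (t, L)) = enc_opt (evf t f (list_decode L))"
  by (simp add: E_def)

definition tlc :: "nat \<Rightarrow> nat" where "tlc c = psnd (c - 1)"

lemma prod_decode_0: "prod_decode 0 = (0, 0)"
proof -
  have "prod_encode (0, 0) = 0" by (simp add: prod_encode_def)
  then show ?thesis using prod_encode_inverse[of "(0, 0)"] by simp
qed

lemma tlc_tl: "list_decode (tlc c) = tl (list_decode c)"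
proof (cases c)
  case 0 then show ?thesis by (simp add: tlc_def prod_decode_0)
next
  case (Suc d) then show ?thesis by (simp add: tlc_def)
qed

lemma tlc_drop: "list_decode ((tlc ^^ k) c) = drop k (list_decode c)"
  by (induction k) (simp_all add: tlc_tl drop_Suc tl_drop)

lemma list_decode_eq_Nil: "list_decode c = [] \<longleftrightarrow> c = 0"
  by (metis list_decode.simps(1) list_decode_inverse list_encode.simps(1))

lemma rf_tlc: "rec1 Kf \<Longrightarrow> rec1 C \<Longrightarrow> rec1 (\<lambda>n. (tlc ^^ Kf n) (C n))"
proof -
  have "rec1 (\<lambda>c. psnd (c - 1))" by (intro rf_psnd rf_sub rf_id rf_const)
  then have "rec1 tlc" unfolding tlc_def[abs_def] .
  then show "rec1 Kf \<Longrightarrow> rec1 C \<Longrightarrow> rec1 (\<lambda>n. (tlc ^^ Kf n) (C n))" by (rule rf_iter)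
qed

lemma E_Zero: "rec1 (E Zero)"
proof -
  have "E Zero = (\<lambda>m. 1)" by (simp add: E_def fun_eq_iff)
  then show ?thesis using rf_const by simp
qed

lemma E_Succ: "rec1 (E Succ)"
proof -
  have "E Succ = (\<lambda>m. if psnd m = 0 then 0 else Suc (Suc (pfst (psnd m - 1))))"
  proof
    fix m show "E Succ m = (if psnd m = 0 then 0 else Suc (Suc (pfst (psnd m - 1))))"
      by (cases "psnd m") (simp_all add: E_def list_decode_Suc)
  qed
  moreover have "rec1 (\<lambda>m. if psnd m = 0 then 0 else Suc (Suc (pfst (psnd m - 1))))"
    by (intro rf_if rp_eq rf_Suc rf_pfst rf_psnd rf_sub rf_id rf_const)
  ultimately show ?thesis by simp
qed

lemma E_Proj: "rec1 (E (Proj i))"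
proof -
  have "E (Proj i) m = (if (tlc ^^ i) (psnd m) = 0 then 0 else Suc (pfst ((tlc ^^ i) (psnd m) - 1)))" for m
  proof -
    let ?xs = "list_decode (psnd m)" let ?c = "(tlc ^^ i) (psnd m)"
    have d: "list_decode ?c = drop i ?xs" by (rule tlc_drop)
    show ?thesis
    proof (cases ?c)
      case 0
      then have "drop i ?xs = []" using d by simp
      then show ?thesis using 0 by (simp add: E_def)
    next
      case (Suc e)
      then have "drop i ?xs = pfst e # list_decode (psnd e)" using d list_decode_Suc by simp
      then have "i < length ?xs" "?xs ! i = pfst e"
        by (metis drop_all list.distinct(1) not_less, metis hd_drop_conv_nth drop_all list.distinct(1) not_less list.sel(1))
      then show ?thesis using Suc by (simp add: E_def)
    qed
  qed
  then have "E (Proj i) = (\<lambda>m. if (tlc ^^ i) (psnd m) = 0 then 0 else Suc (pfst ((tlc ^^ i) (psnd m) - 1)))"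
    by auto
  moreover have "rec1 (\<lambda>m. if (tlc ^^ i) (psnd m) = 0 then 0 else Suc (pfst ((tlc ^^ i) (psnd m) - 1)))"
    by (intro rf_if rp_eq rf_Suc rf_pfst rf_psnd rf_sub rf_id rf_const rf_tlc)
  ultimately show ?thesis by simp
qed

definition Cg :: "recf list \<Rightarrow> nat \<Rightarrow> nat" where
  "Cg gs m = (case those (map (\<lambda>g. evf (pfst m) g (list_decode (psnd m))) gs) of None \<Rightarrow> 0 | Some zs \<Rightarrow> Suc (list_encode zs))"

lemma Cg_rec: "(\<forall>g\<in>set gs. rec1 (E g)) \<Longrightarrow> rec1 (Cg gs)"
proof (induction gs)
  case Nil
  have "Cg [] = (\<lambda>m. 1)" by (simp add: Cg_def fun_eq_iff)
  then show ?case using rf_const by simp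
next
  case (Cons g gs)
  have Eg: "rec1 (E g)" and IH: "rec1 (Cg gs)" using Cons by auto
  have "Cg (g # gs) m = (if E g m = 0 then 0 else if Cg gs m = 0 then 0
      else Suc (Suc (prod_encode (E g m - 1, Cg gs m - 1))))" for m
    by (auto simp: Cg_def E_def enc_opt_def split: option.split)
  then have "Cg (g # gs) = (\<lambda>m. if E g m = 0 then 0 else if Cg gs m = 0 then 0
      else Suc (Suc (prod_encode (E g m - 1, Cg gs m - 1))))" by auto
  moreover have "rec1 (\<lambda>m. if E g m = 0 then 0 else if Cg gs m = 0 then 0
      else Suc (Suc (prod_encode (E g m - 1, Cg gs m - 1))))"
    by (intro rf_if rp_eq rf_Suc rf_pe rf_sub rf_const Eg IH)
  ultimately show ?case by simp
qed

lemma E_Comp: "rec1 (E f) \<Longrightarrow> (\<forall>g\<in>set gs. rec1 (E g)) \<Longrightarrow> rec1 (E (Comp f gs))"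
proof -
  assume Ef: "rec1 (E f)" and Eg: "\<forall>g\<in>set gs. rec1 (E g)"
  have C: "rec1 (Cg gs)" using Cg_rec[OF Eg] .
  have "E (Comp f gs) m = (if Cg gs m = 0 then 0 else E f (prod_encode (pfst m, Cg gs m - 1)))" for m
    by (simp add: Cg_def E_def split: option.split)
  then have "E (Comp f gs) = (\<lambda>m. if Cg gs m = 0 then 0 else E f (prod_encode (pfst m, Cg gs m - 1)))" by auto
  moreover have "rec1 (\<lambda>m. if Cg gs m = 0 then 0 else E f (prod_encode (pfst m, Cg gs m - 1)))"
    by (intro rf_if rp_eq rf_comp[OF Ef] rf_pe rf_pfst rf_sub rf_id rf_const C)
  ultimately show ?thesis by simp
qed

lemma E_Prec: "rec1 (E f) \<Longrightarrow> rec1 (E g) \<Longrightarrow> rec1 (E (Prec f g))"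
proof -
  assume Ef: "rec1 (E f)" and Eg: "rec1 (E g)"
  define H where "H = (\<lambda>i acc m. if acc = 0 then 0 else
      E g (prod_encode (pfst m, Suc (prod_encode (acc - 1, Suc (prod_encode (i, psnd (psnd m - 1))))))))"
  have key: "enc_opt (rec_nat (evf t f ys) (\<lambda>k acc. case acc of None \<Rightarrow> None | Some z \<Rightarrow> evf t g (z # k # ys)) j)
      = rec_nat (enc_opt (evf t f ys)) (\<lambda>i acc. H i acc m) j"
    if "pfst m = t" "list_decode (psnd (psnd m - 1)) = ys" for t ys j m
  proof (induction j)
    case 0 then show ?case by simp
  next
    case (Suc j)
    show ?case
    proof (cases "rec_nat (evf t f ys) (\<lambda>k acc. case acc of None \<Rightarrow> None | Some z \<Rightarrow> evf t g (z # k # ys)) j")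
      case None
      then show ?thesis using Suc.IH by (simp add: H_def)
    next
      case (Some z)
      have "list_decode (Suc (prod_encode (z, Suc (prod_encode (j, psnd (psnd m - 1)))))) = z # j # ys"
        using that by simp
      have r: "rec_nat (enc_opt (evf t f ys)) (\<lambda>i acc. H i acc m) j = Suc z"
        using Suc.IH Some by simp
      have "rec_nat (enc_opt (evf t f ys)) (\<lambda>i acc. H i acc m) (Suc j) = H j (Suc z) m"
        using r by simp
      also have "\<dots> = enc_opt (evf t g (z # j # ys))"
        unfolding H_def E_pe using that by simp
      finally show ?thesis using Some by simp
    qed
  qed
  have "E (Prec f g) m = (if psnd m = 0 then 0 else
      rec_nat (E f (prod_encode (pfst m, psnd (psnd m - 1)))) (\<lambda>i acc. H i acc m) (pfst (psnd m - 1)))" for m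
  proof (cases "psnd m")
    case 0 then show ?thesis by (simp add: E_def)
  next
    case (Suc d)
    then have xs: "list_decode (psnd m) = pfst d # list_decode (psnd d)" by (simp add: list_decode_Suc)
    have "E (Prec f g) m = enc_opt (rec_nat (evf (pfst m) f (list_decode (psnd d)))
        (\<lambda>k acc. case acc of None \<Rightarrow> None | Some z \<Rightarrow> evf (pfst m) g (z # k # list_decode (psnd d))) (pfst d))"
      unfolding E_def xs by simp
    also have "\<dots> = rec_nat (enc_opt (evf (pfst m) f (list_decode (psnd d)))) (\<lambda>i acc. H i acc m) (pfst d)"
      by (rule key) (simp_all add: Suc)
    finally show ?thesis using Suc by (simp add: E_pe)
  qed
  then have "E (Prec f g) = (\<lambda>m. if psnd m = 0 then 0 else
      rec_nat (E f (prod_encode (pfst m, psnd (psnd m - 1)))) (\<lambda>i acc. H i acc m) (pfst (psnd m - 1)))" by auto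
  moreover have "rec1 (\<lambda>m. H (pfst m) (pfst (psnd m)) (psnd (psnd m)))"
    unfolding H_def by (intro rf_if rp_eq rf_comp[OF Eg] rf_pe rf_pfst rf_psnd rf_sub rf_Suc rf_id rf_const)
  then have "rec1 (\<lambda>m. rec_nat (E f (prod_encode (pfst m, psnd (psnd m - 1)))) (\<lambda>i acc. H i acc m) (pfst (psnd m - 1)))"
    by (intro rf_prec rf_comp[OF Ef] rf_pe rf_pfst rf_psnd rf_sub rf_id rf_const)
  then have "rec1 (\<lambda>m. if psnd m = 0 then 0 else
      rec_nat (E f (prod_encode (pfst m, psnd (psnd m - 1)))) (\<lambda>i acc. H i acc m) (pfst (psnd m - 1)))"
    by (intro rf_if rp_eq rf_psnd rf_id rf_const)
  ultimately show ?thesis by simp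
qed

definition st_enc :: "nat option option \<Rightarrow> nat" where
  "st_enc s = (case s of None \<Rightarrow> 0 | Some None \<Rightarrow> 1 | Some (Some i) \<Rightarrow> i + 2)"

lemma E_Minim: "rec1 (E f) \<Longrightarrow> rec1 (E (Minim f))"
proof -
  assume Ef: "rec1 (E f)"
  define H where "H = (\<lambda>i s m. if s = 1 then
      (if E f (prod_encode (pfst m, Suc (prod_encode (i, psnd m)))) = 0 then 0
       else if E f (prod_encode (pfst m, Suc (prod_encode (i, psnd m)))) = 1 then i + 2 else 1) else s)"
  have key: "st_enc (msearch_st k (\<lambda>i. evf (pfst m) f (i # list_decode (psnd m)))) = rec_nat 1 (\<lambda>i s. H i s m) k" for k m
  proof (induction k)
    case 0 then show ?case by (simp add: msearch_st_def st_enc_def)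
  next
    case (Suc k)
    let ?F = "\<lambda>i. evf (pfst m) f (i # list_decode (psnd m))"
    have F: "E f (prod_encode (pfst m, Suc (prod_encode (k, psnd m)))) = enc_opt (?F k)"
      by (simp add: E_pe)
    have st: "msearch_st (Suc k) ?F = (case msearch_st k ?F of Some None \<Rightarrow>
      (case ?F k of None \<Rightarrow> None | Some 0 \<Rightarrow> Some (Some k) | Some (Suc _) \<Rightarrow> Some None) | _ \<Rightarrow> msearch_st k ?F)"
      by (simp add: msearch_st_def split: option.split)
    show ?case
      using Suc.IH F unfolding st
      by (auto simp: H_def st_enc_def split: option.split option.split_asm nat.split)
  qed
  have "E (Minim f) m = (let s = rec_nat 1 (\<lambda>i s. H i s m) (pfst m) in if 2 \<le> s then s - 1 else 0)" for m
  proof -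
    have "E (Minim f) m = enc_opt (msearch (pfst m) (\<lambda>i. evf (pfst m) f (i # list_decode (psnd m))))"
      by (simp add: E_def)
    also have "\<dots> = (let s = st_enc (msearch_st (pfst m) (\<lambda>i. evf (pfst m) f (i # list_decode (psnd m)))) in if 2 \<le> s then s - 1 else 0)"
      by (simp add: msearch_def st_enc_def split: option.split)
    finally show ?thesis unfolding key .
  qed
  then have "E (Minim f) = (\<lambda>m. let s = rec_nat 1 (\<lambda>i s. H i s m) (pfst m) in if 2 \<le> s then s - 1 else 0)" by auto
  moreover have "rec1 (\<lambda>m. H (pfst m) (pfst (psnd m)) (psnd (psnd m)))"
    unfolding H_def by (intro rf_if rp_eq rf_comp[OF Ef] rf_pe rf_pfst rf_psnd rf_add rf_Suc rf_id rf_const)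
  then have R: "rec1 (\<lambda>m. rec_nat 1 (\<lambda>i s. H i s m) (pfst m))"
    by (intro rf_prec rf_pfst rf_id rf_const)
  have "rec1 (\<lambda>m. if 2 \<le> rec_nat 1 (\<lambda>i s. H i s m) (pfst m) then rec_nat 1 (\<lambda>i s. H i s m) (pfst m) - 1 else 0)"
    by (intro rf_if rp_le rf_sub rf_const R)
  ultimately show ?thesis by (simp only: Let_def)
qed

lemma E_rec: "rec1 (E f)"
proof (induction f)
  case Zero then show ?case by (rule E_Zero)
next
  case Succ then show ?case by (rule E_Succ)
next
  case (Proj i) then show ?case by (rule E_Proj)
next
  case (Comp f gs) then show ?case using E_Comp by blast
next
  case (Prec f g) then show ?case using E_Prec by blast
next
  case (Minim f) then show ?case using E_Minim by blast
qed

lemma re_bounded: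
  assumes "re_set A"
  shows "\<exists>Q. (\<forall>n. n \<in> A \<longleftrightarrow> (\<exists>t. Q t n)) \<and> (\<forall>n t t'. Q t n \<longrightarrow> t \<le> t' \<longrightarrow> Q t' n)
             \<and> rp (\<lambda>m. Q (pfst m) (psnd m))"
proof -
  obtain f where f: "\<forall>n. n \<in> A \<longleftrightarrow> (\<exists>y. ev f [n] y)" using assms unfolding re_set_def by blast
  define Q where "Q = (\<lambda>t n. \<exists>s<Suc t. evf s f [n] \<noteq> None)"
  have 1: "n \<in> A \<longleftrightarrow> (\<exists>t. Q t n)" for n
  proof
    assume "n \<in> A"
    then obtain y where "ev f [n] y" using f by blast
    then obtain T where "\<forall>t\<ge>T. evf t f [n] = Some y" using evf_complete by blast
    then have "Q T n" unfolding Q_def by auto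
    then show "\<exists>t. Q t n" by blast
  next
    assume "\<exists>t. Q t n"
    then obtain s y where "evf s f [n] = Some y" unfolding Q_def by blast
    then have "ev f [n] y" by (rule evf_sound)
    then show "n \<in> A" using f by blast
  qed
  have 2: "\<forall>n t t'. Q t n \<longrightarrow> t \<le> t' \<longrightarrow> Q t' n" unfolding Q_def by (meson le_imp_less_Suc less_trans_Suc not_less_eq)
  have e: "evf s f [n] \<noteq> None \<longleftrightarrow> E f (prod_encode (s, Suc (prod_encode (n, 0)))) \<noteq> 0" for s n
    by (simp add: E_pe enc_opt_def split: option.split)
  have "rp (\<lambda>m. E f (prod_encode (pfst m, Suc (prod_encode (psnd (psnd m), 0)))) \<noteq> 0)"
    by (intro rp_ne0 rf_comp[OF E_rec] rf_pe rf_Suc rf_pfst rf_psnd rf_id rf_const)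
  then have "rp (\<lambda>m. evf (pfst m) f [psnd (psnd m)] \<noteq> None)" unfolding e .
  then have "rp (\<lambda>m. \<exists>s<Suc (pfst m). evf s f [psnd m] \<noteq> None)"
    by (intro rp_bex[where P="\<lambda>s m. evf s f [psnd m] \<noteq> None"] rf_Suc rf_pfst rf_id)
  then have 3: "rp (\<lambda>m. Q (pfst m) (psnd m))" unfolding Q_def .
  show ?thesis using 1 2 3 by blast
qed


section \<open>Computable list operations on codes\<close>

definition c_cons :: "nat \<Rightarrow> nat \<Rightarrow> nat" where "c_cons x a = Suc (prod_encode (x, a))"

lemma list_decode_c_cons[simp]: "list_decode (c_cons x a) = x # list_decode a"
  by (simp add: c_cons_def)

lemma rf_c_cons: "rec1 A \<Longrightarrow> rec1 B \<Longrightarrow> rec1 (\<lambda>n. c_cons (A n) (B n))"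
  unfolding c_cons_def by (intro rf_Suc rf_pe)

definition c_len :: "nat \<Rightarrow> nat" where "c_len n = foldl (\<lambda>acc x. Suc acc) 0 (list_decode n)"

lemma foldl_count: "foldl (\<lambda>acc x. Suc acc) a xs = a + length xs"
  by (induction xs arbitrary: a) auto

lemma c_len_eq[simp]: "c_len n = length (list_decode n)"
  by (simp add: c_len_def foldl_count)

lemma rec_c_len: "rec1 c_len"
proof -
  have "rec1 (\<lambda>n. foldl (\<lambda>acc x. Suc acc) 0 (list_decode n))"
    by (rule rf_fold) (intro rf_Suc rf_pfst rf_psnd rf_id rf_const)+
  then show ?thesis unfolding c_len_def[abs_def] .
qed

definition c_rev :: "nat \<Rightarrow> nat" where "c_rev n = foldl (\<lambda>acc x. c_cons x acc) 0 (list_decode n)"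

lemma foldl_cons_code: "list_decode (foldl (\<lambda>acc x. c_cons x acc) a xs) = rev xs @ list_decode a"
  by (induction xs arbitrary: a) auto

lemma c_rev_eq[simp]: "list_decode (c_rev n) = rev (list_decode n)"
  by (simp add: c_rev_def foldl_cons_code)

lemma rec_c_rev: "rec1 c_rev"
proof -
  have "rec1 (\<lambda>n. foldl (\<lambda>acc x. c_cons x acc) 0 (list_decode n))"
    by (rule rf_fold) (intro rf_c_cons rf_pfst rf_psnd rf_id rf_const)+
  then show ?thesis unfolding c_rev_def[abs_def] .
qed

definition c_drop :: "nat \<Rightarrow> nat \<Rightarrow> nat" where "c_drop i n = (tlc ^^ i) n"

lemma c_drop_eq[simp]: "list_decode (c_drop i n) = drop i (list_decode n)"
  by (simp add: c_drop_def tlc_drop)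

lemma rf_c_drop: "rec1 A \<Longrightarrow> rec1 B \<Longrightarrow> rec1 (\<lambda>n. c_drop (A n) (B n))"
  unfolding c_drop_def by (rule rf_tlc)

definition c_take :: "nat \<Rightarrow> nat \<Rightarrow> nat" where "c_take l n = c_rev (c_drop (c_len n - l) (c_rev n))"

lemma c_take_eq[simp]: "list_decode (c_take l n) = take l (list_decode n)"
  by (cases "l \<le> length (list_decode n)") (simp_all add: c_take_def rev_drop)

lemma rf_comp_c_len: "rec1 A \<Longrightarrow> rec1 (\<lambda>n. c_len (A n))" by (rule rf_comp[OF rec_c_len])
lemma rf_comp_c_rev: "rec1 A \<Longrightarrow> rec1 (\<lambda>n. c_rev (A n))" by (rule rf_comp[OF rec_c_rev])

lemma rf_c_take: "rec1 A \<Longrightarrow> rec1 B \<Longrightarrow> rec1 (\<lambda>n. c_take (A n) (B n))"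
  unfolding c_take_def by (intro rf_comp_c_rev rf_c_drop rf_sub rf_comp_c_len)

definition c_app :: "nat \<Rightarrow> nat \<Rightarrow> nat" where
  "c_app a b = foldl (\<lambda>acc x. c_cons x acc) b (list_decode (c_rev a))"

lemma c_app_eq[simp]: "list_decode (c_app a b) = list_decode a @ list_decode b"
  by (simp add: c_app_def foldl_cons_code)

lemma rf_c_app: "rec1 A \<Longrightarrow> rec1 B \<Longrightarrow> rec1 (\<lambda>n. c_app (A n) (B n))"
  unfolding c_app_def
  by (rule rf_fold) (intro rf_c_cons rf_pfst rf_psnd rf_id rf_comp_c_rev | assumption)+

definition invc :: "nat \<Rightarrow> nat" where "invc c = prod_encode (pfst c, 1 - psnd c)"

lemma rf_invc: "rec1 A \<Longrightarrow> rec1 (\<lambda>n. invc (A n))"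
  unfolding invc_def by (intro rf_pe rf_pfst rf_psnd rf_sub rf_const)

definition c_winv :: "nat \<Rightarrow> nat" where
  "c_winv n = foldl (\<lambda>acc x. c_cons (invc x) acc) 0 (list_decode n)"

lemma foldl_cons_inv_code: "list_decode (foldl (\<lambda>acc x. c_cons (invc x) acc) a xs) = rev (map invc xs) @ list_decode a"
  by (induction xs arbitrary: a) auto

lemma c_winv_eq[simp]: "list_decode (c_winv n) = rev (map invc (list_decode n))"
  by (simp add: c_winv_def foldl_cons_inv_code)

lemma rf_c_winv: "rec1 A \<Longrightarrow> rec1 (\<lambda>n. c_winv (A n))"
proof -
  have "rec1 (\<lambda>n. foldl (\<lambda>acc x. c_cons (invc x) acc) 0 (list_decode n))"
    by (rule rf_fold) (intro rf_c_cons rf_invc rf_pfst rf_psnd rf_id rf_const)+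
  then have "rec1 c_winv" unfolding c_winv_def[abs_def] .
  then show "rec1 A \<Longrightarrow> rec1 (\<lambda>n. c_winv (A n))" by (rule rf_comp)
qed

fun lc_red_cons :: "nat \<Rightarrow> nat list \<Rightarrow> nat list" where
  "lc_red_cons x [] = [x]"
| "lc_red_cons x (y # ys) = (if y = invc x then ys else x # y # ys)"

definition redc :: "nat list \<Rightarrow> nat list" where "redc xs = foldr lc_red_cons xs []"

definition rcons_c :: "nat \<Rightarrow> nat \<Rightarrow> nat" where
  "rcons_c x acc = (if acc \<noteq> 0 \<and> pfst (acc - 1) = invc x then psnd (acc - 1) else c_cons x acc)"

lemma rcons_c_eq: "list_decode (rcons_c x acc) = lc_red_cons x (list_decode acc)"
proof (cases acc)
  case 0 then show ?thesis by (simp add: rcons_c_def)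
next
  case (Suc d) then show ?thesis by (simp add: rcons_c_def)
qed

definition c_red :: "nat \<Rightarrow> nat" where
  "c_red n = foldl (\<lambda>acc x. rcons_c x acc) 0 (list_decode (c_rev n))"

lemma foldl_rcons: "list_decode (foldl (\<lambda>acc x. rcons_c x acc) a xs) = foldl (\<lambda>l x. lc_red_cons x l) (list_decode a) xs"
  by (induction xs arbitrary: a) (simp_all add: rcons_c_eq)

lemma c_red_eq[simp]: "list_decode (c_red n) = redc (list_decode n)"
  by (simp add: c_red_def foldl_rcons redc_def foldr_conv_foldl)

lemma rf_rcons_c: "rec1 A \<Longrightarrow> rec1 B \<Longrightarrow> rec1 (\<lambda>n. rcons_c (A n) (B n))"
  unfolding rcons_c_def
  by (intro rf_if rp_conj rp_not rp_eq rf_pfst rf_psnd rf_sub rf_invc rf_c_cons rf_const | assumption)+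

lemma rf_c_red: "rec1 A \<Longrightarrow> rec1 (\<lambda>n. c_red (A n))"
proof -
  have "rec1 (\<lambda>n. foldl (\<lambda>acc x. rcons_c x acc) 0 (list_decode (c_rev n)))"
    by (rule rf_fold) (intro rf_rcons_c rf_pfst rf_psnd rf_id rf_const rf_comp_c_rev)+
  then have "rec1 c_red" unfolding c_red_def[abs_def] .
  then show "rec1 A \<Longrightarrow> rec1 (\<lambda>n. c_red (A n))" by (rule rf_comp)
qed

definition c_piece :: "nat \<Rightarrow> nat" where
  "c_piece it = c_app (pfst it) (c_app (if psnd (psnd it) = 0 then c_winv (pfst (psnd it)) else pfst (psnd it)) (c_winv (pfst it)))"

lemma rf_c_piece: "rec1 A \<Longrightarrow> rec1 (\<lambda>n. c_piece (A n))"
  unfolding c_piece_def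
  by (intro rf_c_app rf_if rp_eq rf_c_winv rf_pfst rf_psnd rf_const | assumption)+

definition c_pieces :: "nat \<Rightarrow> nat" where
  "c_pieces cc = foldl (\<lambda>acc it. c_app acc (c_piece it)) 0 (list_decode cc)"

lemma rf_c_pieces: "rec1 A \<Longrightarrow> rec1 (\<lambda>n. c_pieces (A n))"
proof -
  have "rec1 (\<lambda>n. foldl (\<lambda>acc it. c_app acc (c_piece it)) 0 (list_decode n))"
    by (rule rf_fold) (intro rf_c_app rf_c_piece rf_pfst rf_psnd rf_id rf_const)+
  then have "rec1 c_pieces" unfolding c_pieces_def[abs_def] .
  then show "rec1 A \<Longrightarrow> rec1 (\<lambda>n. c_pieces (A n))" by (rule rf_comp)
qed

lemma foldl_app_code: "list_decode (foldl (\<lambda>acc x. c_app acc (F x)) a xs) = list_decode a @ concat (map (\<lambda>x. list_decode (F x)) xs)"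
  by (induction xs arbitrary: a) auto

lemma c_pieces_eq: "list_decode (c_pieces cc) = concat (map (\<lambda>it. list_decode (c_piece it)) (list_decode cc))"
  by (simp add: c_pieces_def foldl_app_code)

definition c_phis :: "(nat \<Rightarrow> nat) \<Rightarrow> nat \<Rightarrow> nat" where
  "c_phis P u = foldl (\<lambda>acc x. c_app acc (P x)) 0 (list_decode u)"

lemma c_phis_eq: "list_decode (c_phis P u) = concat (map (\<lambda>x. list_decode (P x)) (list_decode u))"
  by (simp add: c_phis_def foldl_app_code)

lemma rf_c_phis: "rec1 P \<Longrightarrow> rec1 A \<Longrightarrow> rec1 (\<lambda>n. c_phis P (A n))"
proof -
  assume P: "rec1 P"
  have "rec1 (\<lambda>n. foldl (\<lambda>acc x. c_app acc (P x)) 0 (list_decode n))"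
    by (rule rf_fold) (intro rf_c_app rf_comp[OF P] rf_pfst rf_psnd rf_id rf_const)+
  then have "rec1 (c_phis P)" unfolding c_phis_def[abs_def] .
  then show "rec1 A \<Longrightarrow> rec1 (\<lambda>n. c_phis P (A n))" by (rule rf_comp)
qed

definition c_allin :: "nat set \<Rightarrow> nat \<Rightarrow> nat" where
  "c_allin A n = foldl (\<lambda>acc x. if acc \<noteq> 0 \<and> x \<in> A then 1 else 0) 1 (list_decode n)"

lemma foldl_valid: "(foldl (\<lambda>acc it. if acc \<noteq> 0 \<and> P it then 1 else (0::nat)) a xs \<noteq> 0) \<longleftrightarrow> (a \<noteq> 0 \<and> (\<forall>it\<in>set xs. P it))"
proof (induction xs arbitrary: a)
  case Nil then show ?case by simp
next
  case (Cons x xs)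
  have "foldl (\<lambda>acc it. if acc \<noteq> 0 \<and> P it then 1 else (0::nat)) a (x # xs)
     = foldl (\<lambda>acc it. if acc \<noteq> 0 \<and> P it then 1 else 0) (if a \<noteq> 0 \<and> P x then 1 else 0) xs" by simp
  then show ?case using Cons.IH[of "if a \<noteq> 0 \<and> P x then 1 else 0"] by auto
qed

lemma foldl_allin: "(foldl (\<lambda>acc x. if acc \<noteq> 0 \<and> x \<in> A then 1 else (0::nat)) a xs \<noteq> 0) \<longleftrightarrow> (a \<noteq> 0 \<and> set xs \<subseteq> A)"
  using foldl_valid[of "\<lambda>x. x \<in> A" a xs] by blast

lemma c_allin_eq: "c_allin A n \<noteq> 0 \<longleftrightarrow> set (list_decode n) \<subseteq> A"
  unfolding c_allin_def using foldl_allin[of A 1 "list_decode n"] by simp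

lemma rf_c_allin: "finite A \<Longrightarrow> rec1 B \<Longrightarrow> rec1 (\<lambda>n. c_allin A (B n))"
proof -
  assume A: "finite A"
  have "rec1 (\<lambda>n. foldl (\<lambda>acc x. if acc \<noteq> 0 \<and> x \<in> A then 1 else 0) 1 (list_decode n))"
    by (rule rf_fold) (intro rf_if rp_conj rp_not rp_eq rp_comp[OF rp_mem[OF A]] rf_pfst rf_psnd rf_id rf_const)+
  then have "rec1 (c_allin A)" unfolding c_allin_def[abs_def] .
  then show "rec1 B \<Longrightarrow> rec1 (\<lambda>n. c_allin A (B n))" by (rule rf_comp)
qed

definition c_valid :: "nat set \<Rightarrow> (nat \<Rightarrow> nat \<Rightarrow> bool) \<Rightarrow> nat \<Rightarrow> nat \<Rightarrow> nat" where
  "c_valid A Q cc t = foldl (\<lambda>acc it. if acc \<noteq> 0 \<and> c_allin A (pfst it) \<noteq> 0 \<and> Q t (pfst (psnd it)) then 1 else 0) 1 (list_decode cc)"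

lemma c_valid_eq: "c_valid A Q cc t \<noteq> 0 \<longleftrightarrow> (\<forall>it\<in>set (list_decode cc). set (list_decode (pfst it)) \<subseteq> A \<and> Q t (pfst (psnd it)))"
proof -
  have "c_valid A Q cc t \<noteq> 0 \<longleftrightarrow> (\<forall>it\<in>set (list_decode cc). c_allin A (pfst it) \<noteq> 0 \<and> Q t (pfst (psnd it)))"
    unfolding c_valid_def using foldl_valid[of "\<lambda>it. c_allin A (pfst it) \<noteq> 0 \<and> Q t (pfst (psnd it))" 1 "list_decode cc"]
    by (simp only: simp_thms one_neq_zero not_False_eq_True)
  then show ?thesis using c_allin_eq by blast
qed

lemma rf_c_valid:
  assumes A: "finite A" and Q: "rp (\<lambda>m. Q (pfst m) (psnd m))"
  shows "rec1 Ac \<Longrightarrow> rec1 Tc \<Longrightarrow> rec1 (\<lambda>n. c_valid A Q (Ac n) (Tc n))"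
proof -
  have Q': "rp (\<lambda>m. Q (psnd (psnd (psnd m))) (pfst (psnd (pfst (psnd m)))))"
    using rp_comp[OF Q, of "\<lambda>m. prod_encode (psnd (psnd (psnd m)), pfst (psnd (pfst (psnd m))))"]
    by (simp add: rf_pe rf_pfst rf_psnd rf_id)
  have "rec1 (\<lambda>n. foldl (\<lambda>acc it. if acc \<noteq> 0 \<and> c_allin A (pfst it) \<noteq> 0 \<and> Q (psnd n) (pfst (psnd it)) then 1 else 0) 1 (list_decode (pfst n)))"
    by (rule rf_fold) (intro rf_if rp_conj rp_ne0 rf_c_allin[OF A] Q' rf_pfst rf_psnd rf_id rf_const)+
  then have "rec1 (\<lambda>n. c_valid A Q (pfst n) (psnd n))" unfolding c_valid_def .
  from rf_comp[OF this, of "\<lambda>n. prod_encode (Ac n, Tc n)"]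
  show "rec1 Ac \<Longrightarrow> rec1 Tc \<Longrightarrow> rec1 (\<lambda>n. c_valid A Q (Ac n) (Tc n))" by (simp add: rf_pe)
qed


section \<open>Free reduction\<close>

lemma inv_inv_letter[simp]: "inv_letter (inv_letter x) = x"
  by (simp add: inv_letter_def)

lemma inv_letter_eq_iff: "inv_letter x = y \<longleftrightarrow> x = inv_letter y"
  by (auto simp: inv_letter_def)

lemma fst_inv_letter[simp]: "fst (inv_letter x) = fst x"
  by (simp add: inv_letter_def)

lemma reduced_Nil[simp]: "reduced []"
  by (simp add: reduced_def)

lemma reduced_single[simp]: "reduced [x]"
  by (simp add: reduced_def)

lemma reduced_Cons2: "reduced (x # y # ys) \<longleftrightarrow> y \<noteq> inv_letter x \<and> reduced (y # ys)"
proof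
  assume r: "reduced (x # y # ys)"
  have "y \<noteq> inv_letter x" using r[unfolded reduced_def, rule_format, of 0] by simp
  moreover have "reduced (y # ys)" unfolding reduced_def
  proof (intro allI impI)
    fix i assume "Suc i < length (y # ys)"
    then show "(y # ys) ! Suc i \<noteq> inv_letter ((y # ys) ! i)"
      using r[unfolded reduced_def, rule_format, of "Suc i"] by simp
  qed
  ultimately show "y \<noteq> inv_letter x \<and> reduced (y # ys)" by blast
next
  assume h: "y \<noteq> inv_letter x \<and> reduced (y # ys)"
  show "reduced (x # y # ys)" unfolding reduced_def
  proof (intro allI impI)
    fix i assume i: "Suc i < length (x # y # ys)"
    show "(x # y # ys) ! Suc i \<noteq> inv_letter ((x # y # ys) ! i)"
    proof (cases i)
      case 0 then show ?thesis using h by simp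
    next
      case (Suc j)
      then show ?thesis using h[THEN conjunct2, unfolded reduced_def, rule_format, of j] i by simp
    qed
  qed
qed

lemma reduced_tl: "reduced (x # w) \<Longrightarrow> reduced w"
  by (cases w) (simp_all add: reduced_Cons2)

lemma reduced_red_cons: "reduced w \<Longrightarrow> reduced (red_cons x w)"
proof (cases w)
  case Nil then show ?thesis by simp
next
  case (Cons y ys)
  assume "reduced w"
  then show ?thesis using Cons by (auto simp: reduced_Cons2 intro: reduced_tl)
qed

lemma red_cons_cancel: "reduced w \<Longrightarrow> red_cons x (red_cons (inv_letter x) w) = w"
proof (cases w)
  case Nil then show ?thesis by (simp add: inv_letter_eq_iff)
next
  case (Cons y ys)
  assume r: "reduced w"
  show ?thesis
  proof (cases "y = x")
    case True
    then have "red_cons (inv_letter x) w = ys" using Cons by simp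
    moreover have "red_cons x ys = x # ys"
    proof (cases ys)
      case Nil then show ?thesis by simp
    next
      case (Cons z zs)
      then have "z \<noteq> inv_letter x" using r \<open>w = y # ys\<close> True by (simp add: reduced_Cons2)
      then show ?thesis using Cons by simp
    qed
    ultimately show ?thesis using Cons True by simp
  next
    case False
    then have "red_cons (inv_letter x) w = inv_letter x # w" using Cons by (simp add: inv_letter_eq_iff)
    then show ?thesis by simp
  qed
qed

lemma reduce_Nil[simp]: "reduce [] = []"
  by (simp add: reduce_def)

lemma reduce_Cons: "reduce (x # w) = red_cons x (reduce w)"
  by (simp add: reduce_def)

lemma reduced_reduce: "reduced (reduce w)"
  by (induction w) (simp_all add: reduce_Cons reduced_red_cons)

lemma reduce_reduced: "reduced w \<Longrightarrow> reduce w = w"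
proof (induction w)
  case Nil then show ?case by simp
next
  case (Cons x w)
  then have r: "reduce w = w" using reduced_tl by blast
  show ?case
  proof (cases w)
    case Nil then show ?thesis by (simp add: reduce_Cons)
  next
    case (Cons y ys)
    then have "y \<noteq> inv_letter x" using Cons.prems by (simp add: reduced_Cons2)
    then show ?thesis using r Cons by (simp add: reduce_Cons)
  qed
qed

lemma reduce_reduce[simp]: "reduce (reduce w) = reduce w"
  by (rule reduce_reduced[OF reduced_reduce])

lemma reduce_append_foldr: "reduce (u @ v) = foldr red_cons u (reduce v)"
  by (simp add: reduce_def)

lemma foldr_reduced: "reduced w \<Longrightarrow> reduced (foldr red_cons u w)"
  by (induction u) (simp_all add: reduced_red_cons)

lemma foldr_reduce: "reduced w \<Longrightarrow> foldr red_cons (reduce u) w = foldr red_cons u w"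
proof (induction u)
  case Nil then show ?case by simp
next
  case (Cons x u)
  have IH: "foldr red_cons (reduce u) w = foldr red_cons u w" using Cons by blast
  show ?case
  proof (cases "reduce u")
    case Nil
    then show ?thesis using IH by (simp add: reduce_Cons)
  next
    case (Cons y q)
    show ?thesis
    proof (cases "y = inv_letter x")
      case True
      then have "reduce (x # u) = q" using Cons by (simp add: reduce_Cons)
      moreover have "foldr red_cons u w = red_cons (inv_letter x) (foldr red_cons q w)"
        using IH Cons True by simp
      moreover have "reduced (foldr red_cons q w)" using Cons.prems foldr_reduced by blast
      ultimately show ?thesis using red_cons_cancel[of "foldr red_cons q w" x] by simp
    next
      case False
      then have "reduce (x # u) = x # reduce u" using Cons by (simp add: reduce_Cons)
      then show ?thesis using IH by simp
    qed
  qed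
qed

lemma reduce_append: "reduce (u @ v) = reduce (reduce u @ reduce v)"
  by (simp add: reduce_append_foldr foldr_reduce reduced_reduce)

lemma reduce_append_left: "reduce (reduce u @ v) = reduce (u @ v)"
  by (metis reduce_append reduce_reduce)

lemma reduce_append_right: "reduce (u @ reduce v) = reduce (u @ v)"
  by (metis reduce_append reduce_reduce)

lemma set_red_cons: "set (red_cons x w) \<subseteq> insert x (set w)"
  by (cases w) auto

lemma set_reduce: "set (reduce w) \<subseteq> set w"
proof (induction w)
  case Nil then show ?case by simp
next
  case (Cons x w) then show ?case using set_red_cons[of x "reduce w"] by (auto simp: reduce_Cons)
qed

lemma word_inv_Nil[simp]: "word_inv [] = []"
  by (simp add: word_inv_def)

lemma word_inv_Cons: "word_inv (x # w) = word_inv w @ [inv_letter x]"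
  by (simp add: word_inv_def)

lemma word_inv_append: "word_inv (u @ v) = word_inv v @ word_inv u"
  by (simp add: word_inv_def)

lemma word_inv_word_inv[simp]: "word_inv (word_inv w) = w"
  by (simp add: word_inv_def rev_map comp_def)

lemma set_word_inv: "set (word_inv w) = inv_letter ` set w"
  by (simp add: word_inv_def)

lemma length_word_inv[simp]: "length (word_inv w) = length w"
  by (simp add: word_inv_def)

lemma reduce_inv_self: "reduce (word_inv w @ w) = []"
proof (induction w)
  case Nil then show ?case by simp
next
  case (Cons x w)
  have "reduce (inv_letter x # x # w) = reduce w"
    using red_cons_cancel[OF reduced_reduce, of "inv_letter x" w] by (simp add: reduce_Cons)
  then have "reduce (word_inv (x # w) @ x # w) = reduce (word_inv w @ reduce w)"
    by (simp add: word_inv_Cons reduce_append_foldr)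
  also have "\<dots> = []" using Cons reduce_append_right by metis
  finally show ?case .
qed

lemma reduce_self_inv: "reduce (w @ word_inv w) = []"
  using reduce_inv_self[of "word_inv w"] by simp

lemma reduced_word_inv: "reduced w \<Longrightarrow> reduced (word_inv w)"
  unfolding reduced_def
proof (intro allI impI)
  fix i assume r: "\<forall>i. Suc i < length w \<longrightarrow> w ! Suc i \<noteq> inv_letter (w ! i)"
    and i: "Suc i < length (word_inv w)"
  let ?n = "length w"
  have a: "word_inv w ! i = inv_letter (w ! (?n - Suc i))" using i
    by (simp add: word_inv_def rev_nth)
  have b: "word_inv w ! Suc i = inv_letter (w ! (?n - Suc (Suc i)))" using i
    by (simp add: word_inv_def rev_nth)
  have c: "?n - Suc i = Suc (?n - Suc (Suc i))" using i by simp
  have "w ! Suc (?n - Suc (Suc i)) \<noteq> inv_letter (w ! (?n - Suc (Suc i)))" using r i by simp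
  then show "word_inv w ! Suc i \<noteq> inv_letter (word_inv w ! i)"
    unfolding a b c by (auto simp: inv_letter_eq_iff)
qed

lemma reduce_word_inv: "reduce (word_inv w) = word_inv (reduce w)"
proof (induction w)
  case Nil then show ?case by simp
next
  case (Cons x w)
  have "reduce (word_inv (x # w)) = reduce (reduce (word_inv w) @ [inv_letter x])"
    by (simp add: word_inv_Cons reduce_append_left)
  also have "\<dots> = reduce (word_inv (reduce w) @ [inv_letter x])" using Cons by simp
  also have "\<dots> = word_inv (reduce (x # w))"
  proof (cases "reduce w")
    case Nil
    then show ?thesis by (simp add: reduce_Cons word_inv_Cons reduce_reduced)
  next
    case (Cons y q)
    show ?thesis
    proof (cases "y = inv_letter x")
      case True
      then have e: "reduce (x # w) = q" using Cons by (simp add: reduce_Cons)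
      have rq: "reduced q" using reduced_reduce[of w] Cons reduced_tl by metis
      have "reduce (word_inv (reduce w) @ [inv_letter x]) = reduce (word_inv q @ [x, inv_letter x])"
        using Cons True by (simp add: word_inv_Cons)
      also have "\<dots> = reduce (word_inv q @ reduce [x, inv_letter x])"
        by (simp only: reduce_append_right)
      also have "reduce [x, inv_letter x] = []"
        using reduce_self_inv[of "[x]"] by (simp add: word_inv_Cons)
      moreover have "reduce (word_inv q) = word_inv q" using rq reduce_reduced reduced_word_inv by blast
      ultimately show ?thesis using e by simp
    next
      case False
      then have e: "reduce (x # w) = x # reduce w" using Cons by (simp add: reduce_Cons)
      have "reduced (x # reduce w)" using False Cons reduced_reduce[of w] by (simp add: reduced_Cons2)
      then have "reduced (word_inv (x # reduce w))" by (rule reduced_word_inv)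
      then show ?thesis unfolding e using reduce_reduced by (simp add: word_inv_Cons)
    qed
  qed
  finally show ?case .
qed


lemma free_group_simps[simp]:
  "carrier (free_group S) = {w. set w \<subseteq> S \<times> UNIV \<and> reduced w}"
  "x \<otimes>\<^bsub>free_group S\<^esub> y = reduce (x @ y)"
  "\<one>\<^bsub>free_group S\<^esub> = []"
  by (simp_all add: free_group_def)

lemma set_reduce_sub: "set w \<subseteq> S \<times> UNIV \<Longrightarrow> set (reduce w) \<subseteq> S \<times> UNIV"
  using set_reduce by blast

lemma set_word_inv_sub: "set w \<subseteq> S \<times> UNIV \<Longrightarrow> set (word_inv w) \<subseteq> S \<times> UNIV"
  by (auto simp: set_word_inv inv_letter_def)

lemma reduce_in_carrier: "set w \<subseteq> S \<times> UNIV \<Longrightarrow> reduce w \<in> carrier (free_group S)"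
  using set_reduce_sub[of w S] reduced_reduce[of w] by simp

lemma free_group_is_group: "group (free_group S)"
proof (rule groupI)
  fix x y assume "x \<in> carrier (free_group S)" "y \<in> carrier (free_group S)"
  then show "x \<otimes>\<^bsub>free_group S\<^esub> y \<in> carrier (free_group S)"
    using reduce_in_carrier[of "x @ y" S] by simp
next
  show "\<one>\<^bsub>free_group S\<^esub> \<in> carrier (free_group S)" by simp
next
  fix x y z
  show "x \<otimes>\<^bsub>free_group S\<^esub> y \<otimes>\<^bsub>free_group S\<^esub> z = x \<otimes>\<^bsub>free_group S\<^esub> (y \<otimes>\<^bsub>free_group S\<^esub> z)"
    by (simp add: reduce_append_left reduce_append_right)
next
  fix x assume "x \<in> carrier (free_group S)"
  then show "\<one>\<^bsub>free_group S\<^esub> \<otimes>\<^bsub>free_group S\<^esub> x = x" by (simp add: reduce_reduced)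
next
  fix x assume x: "x \<in> carrier (free_group S)"
  have "word_inv x \<in> carrier (free_group S)" using x set_word_inv_sub[of x S] reduced_word_inv[of x] by simp
  moreover have "word_inv x \<otimes>\<^bsub>free_group S\<^esub> x = \<one>\<^bsub>free_group S\<^esub>" by (simp add: reduce_inv_self)
  ultimately show "\<exists>y\<in>carrier (free_group S). y \<otimes>\<^bsub>free_group S\<^esub> x = \<one>\<^bsub>free_group S\<^esub>" by blast
qed

interpretation FG: group "free_group S" by (rule free_group_is_group)

lemma free_inv: "x \<in> carrier (free_group S) \<Longrightarrow> inv\<^bsub>free_group S\<^esub> x = word_inv x"
proof -
  assume x: "x \<in> carrier (free_group S)"
  have "word_inv x \<in> carrier (free_group S)" using x set_word_inv_sub[of x S] reduced_word_inv[of x] by simp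
  then show ?thesis using FG.inv_equality[where S=S and y="word_inv x" and x=x] x by (simp add: reduce_inv_self)
qed

section \<open>Normal closure\<close>

definition piece :: "('a word \<times> 'a word \<times> bool) \<Rightarrow> 'a word" where
  "piece p = (case p of (g, r, b) \<Rightarrow> g @ (if b then r else word_inv r) @ word_inv g)"

definition conj_set :: "'a set \<Rightarrow> 'a word set \<Rightarrow> 'a word set" where
  "conj_set S R = {reduce (g @ r @ word_inv g) | g r. g \<in> carrier (free_group S) \<and> r \<in> R}"

lemma ncr_def': "normal_closure_rel S R = generate (free_group S) (conj_set S R)"
  unfolding normal_closure_rel_def conj_set_def by simp

lemma conj_set_sub: "R \<subseteq> lists (S \<times> UNIV) \<Longrightarrow> conj_set S R \<subseteq> carrier (free_group S)"
  unfolding conj_set_def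
proof clarify
  fix g r assume R: "R \<subseteq> lists (S \<times> UNIV)" and g: "g \<in> carrier (free_group S)" and r: "r \<in> R"
  have "set (g @ r @ word_inv g) \<subseteq> S \<times> UNIV" using g r R set_word_inv_sub[of g S] by auto
  then show "reduce (g @ r @ word_inv g) \<in> carrier (free_group S)" by (rule reduce_in_carrier)
qed

lemma conj_set_conj:
  assumes R: "R \<subseteq> lists (S \<times> UNIV)" and x: "x \<in> carrier (free_group S)" and h: "h \<in> conj_set S R"
  shows "x \<otimes>\<^bsub>free_group S\<^esub> h \<otimes>\<^bsub>free_group S\<^esub> inv\<^bsub>free_group S\<^esub> x \<in> conj_set S R"
proof -
  obtain g r where g: "g \<in> carrier (free_group S)" and r: "r \<in> R" and hh: "h = reduce (g @ r @ word_inv g)"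
    using h unfolding conj_set_def by blast
  let ?g = "reduce (x @ g)"
  have g': "?g \<in> carrier (free_group S)" using x g FG.m_closed[where S=S and x=x and y=g] by simp
  have "x \<otimes>\<^bsub>free_group S\<^esub> h \<otimes>\<^bsub>free_group S\<^esub> inv\<^bsub>free_group S\<^esub> x
      = reduce (reduce (x @ reduce (g @ r @ word_inv g)) @ word_inv x)"
    using x hh free_inv[OF x] by simp
  also have "\<dots> = reduce ((x @ g) @ r @ word_inv (x @ g))"
    by (simp add: reduce_append_left reduce_append_right word_inv_append)
  also have "\<dots> = reduce (?g @ r @ word_inv ?g)"
  proof -
    have "reduce ((x @ g) @ r @ word_inv (x @ g)) = reduce (reduce (x @ g) @ reduce (r @ word_inv (x @ g)))"
      using reduce_append by blast
    also have "reduce (r @ word_inv (x @ g)) = reduce (r @ reduce (word_inv (x @ g)))"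
      by (simp add: reduce_append_right)
    also have "reduce (word_inv (x @ g)) = word_inv ?g" by (rule reduce_word_inv)
    finally show ?thesis by (simp add: reduce_append_left reduce_append_right)
  qed
  finally show ?thesis using g' r unfolding conj_set_def by blast
qed

lemma (in group) inv_cancel_left':
  "x \<in> carrier G \<Longrightarrow> y \<in> carrier G \<Longrightarrow> inv x \<otimes> (x \<otimes> y) = y"
  by (simp add: m_assoc[symmetric])

lemma ncr_normal:
  assumes R: "R \<subseteq> lists (S \<times> UNIV)"
  shows "normal_closure_rel S R \<lhd> free_group S"
proof -
  let ?F = "free_group S" let ?X = "conj_set S R"
  have sub: "subgroup (generate ?F ?X) ?F" using FG.generate_is_subgroup[OF conj_set_sub[OF R]] .
  have "x \<otimes>\<^bsub>?F\<^esub> h \<otimes>\<^bsub>?F\<^esub> inv\<^bsub>?F\<^esub> x \<in> generate ?F ?X" if x: "x \<in> carrier ?F" and h: "h \<in> generate ?F ?X" for x h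
    using h
  proof (induction rule: generate.induct)
    case one
    have "x \<otimes>\<^bsub>?F\<^esub> \<one>\<^bsub>?F\<^esub> \<otimes>\<^bsub>?F\<^esub> inv\<^bsub>?F\<^esub> x = \<one>\<^bsub>?F\<^esub>"
      using FG.r_one[where S=S, OF x] FG.r_inv[where S=S, OF x] by (simp only:)
    then show ?case using generate.one[of ?F ?X] by (simp only:)
  next
    case (incl h)
    show ?case by (rule generate.incl[OF conj_set_conj[OF R x incl]])
  next
    case (inv h)
    have hc: "h \<in> carrier ?F" using inv conj_set_sub[OF R] by blast
    have c: "x \<otimes>\<^bsub>?F\<^esub> h \<otimes>\<^bsub>?F\<^esub> inv\<^bsub>?F\<^esub> x \<in> ?X" using conj_set_conj[OF R x inv] .
    have "x \<otimes>\<^bsub>?F\<^esub> inv\<^bsub>?F\<^esub> h \<otimes>\<^bsub>?F\<^esub> inv\<^bsub>?F\<^esub> x = inv\<^bsub>?F\<^esub> (x \<otimes>\<^bsub>?F\<^esub> h \<otimes>\<^bsub>?F\<^esub> inv\<^bsub>?F\<^esub> x)"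
      using hc x by (simp del: free_group_simps add: FG.inv_mult_group FG.m_assoc)
    then show ?case using generate.inv[OF c] by simp
  next
    case (eng h1 h2)
    have c1: "h1 \<in> carrier ?F" "h2 \<in> carrier ?F"
      using subgroup.mem_carrier[OF sub eng.hyps(1)] subgroup.mem_carrier[OF sub eng.hyps(2)] by auto
    have "x \<otimes>\<^bsub>?F\<^esub> (h1 \<otimes>\<^bsub>?F\<^esub> h2) \<otimes>\<^bsub>?F\<^esub> inv\<^bsub>?F\<^esub> x
        = (x \<otimes>\<^bsub>?F\<^esub> h1 \<otimes>\<^bsub>?F\<^esub> inv\<^bsub>?F\<^esub> x) \<otimes>\<^bsub>?F\<^esub> (x \<otimes>\<^bsub>?F\<^esub> h2 \<otimes>\<^bsub>?F\<^esub> inv\<^bsub>?F\<^esub> x)"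
      using c1 x by (simp del: free_group_simps add: FG.m_assoc FG.inv_cancel_left')
    then show ?case using generate.eng[OF eng.IH(1) eng.IH(2)] by (simp only:)
  qed
  then show ?thesis unfolding ncr_def' using FG.normal_inv_iff sub by blast
qed


definition valid_cert :: "'a set \<Rightarrow> 'a word set \<Rightarrow> ('a word \<times> 'a word \<times> bool) list \<Rightarrow> bool" where
  "valid_cert S R L \<longleftrightarrow> (\<forall>p\<in>set L. set (fst p) \<subseteq> S \<times> UNIV \<and> fst (snd p) \<in> R)"

lemma conj_reduce: "reduce (g @ m @ word_inv g) = reduce (reduce g @ m @ word_inv (reduce g))"
proof -
  have "reduce (g @ m @ word_inv g) = reduce (reduce g @ reduce (m @ reduce (word_inv g)))"
    by (simp add: reduce_append_left reduce_append_right)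
  also have "\<dots> = reduce (reduce g @ m @ word_inv (reduce g))"
    by (simp add: reduce_word_inv reduce_append_right)
  finally show ?thesis .
qed

lemma cert_in:
  assumes R: "R \<subseteq> lists (S \<times> UNIV)" and V: "valid_cert S R L"
  shows "reduce (concat (map piece L)) \<in> normal_closure_rel S R"
  using V
proof (induction L)
  case Nil
  show ?case unfolding ncr_def' using generate.one[of "free_group S" "conj_set S R"] by simp
next
  case (Cons p L)
  obtain g r b where p: "p = (g, r, b)" by (cases p) auto
  have g: "set g \<subseteq> S \<times> UNIV" and r: "r \<in> R" using Cons.prems p by (auto simp: valid_cert_def)
  have VL: "valid_cert S R L" using Cons.prems by (simp add: valid_cert_def)
  let ?g = "reduce g"
  have gc: "?g \<in> carrier (free_group S)" using reduce_in_carrier[OF g] .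
  have X: "reduce (?g @ r @ word_inv ?g) \<in> conj_set S R" using gc r unfolding conj_set_def by blast
  have Xc: "reduce (?g @ r @ word_inv ?g) \<in> carrier (free_group S)" using X conj_set_sub[OF R] by blast
  have pin: "reduce (piece p) \<in> normal_closure_rel S R"
  proof (cases b)
    case True
    have "reduce (piece p) = reduce (?g @ r @ word_inv ?g)"
      using p True conj_reduce[of g r] by (simp add: piece_def)
    then show ?thesis using generate.incl[OF X] unfolding ncr_def' by simp
  next
    case False
    have "reduce (piece p) = reduce (?g @ word_inv r @ word_inv ?g)"
      using p False conj_reduce[of g "word_inv r"] by (simp add: piece_def)
    also have "\<dots> = reduce (word_inv (?g @ r @ word_inv ?g))"
      by (simp add: word_inv_append)
    also have "\<dots> = inv\<^bsub>free_group S\<^esub> (reduce (?g @ r @ word_inv ?g))"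
      using free_inv[OF Xc] reduce_word_inv by simp
    finally show ?thesis using generate.inv[OF X] unfolding ncr_def' by simp
  qed
  have "reduce (concat (map piece (p # L))) = reduce (piece p) \<otimes>\<^bsub>free_group S\<^esub> reduce (concat (map piece L))"
    using reduce_append[of "piece p" "concat (map piece L)"] by simp
  then show ?case using generate.eng[OF pin[unfolded ncr_def'] Cons.IH[OF VL, unfolded ncr_def']]
    unfolding ncr_def' by simp
qed

lemma in_cert:
  assumes R: "R \<subseteq> lists (S \<times> UNIV)" and h: "h \<in> normal_closure_rel S R"
  shows "\<exists>L. valid_cert S R L \<and> h = reduce (concat (map piece L))"
  using h unfolding ncr_def'
proof (induction rule: generate.induct)
  case one
  have "valid_cert S R []" by (simp add: valid_cert_def)
  then show ?case by (intro exI[of _ "[]"]) simp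
next
  case (incl h)
  then obtain g r where g: "g \<in> carrier (free_group S)" and r: "r \<in> R" and hh: "h = reduce (g @ r @ word_inv g)"
    unfolding conj_set_def by blast
  have "valid_cert S R [(g, r, True)]" using g r by (simp add: valid_cert_def)
  moreover have "h = reduce (concat (map piece [(g, r, True)]))" using hh by (simp add: piece_def)
  ultimately show ?case by blast
next
  case (inv h)
  then obtain g r where g: "g \<in> carrier (free_group S)" and r: "r \<in> R" and hh: "h = reduce (g @ r @ word_inv g)"
    unfolding conj_set_def by blast
  have hc: "h \<in> carrier (free_group S)" using inv conj_set_sub[OF R] by blast
  have "valid_cert S R [(g, r, False)]" using g r by (simp add: valid_cert_def)
  moreover have "inv\<^bsub>free_group S\<^esub> h = reduce (concat (map piece [(g, r, False)]))"
    using free_inv[OF hc] hh reduce_word_inv[of "g @ r @ word_inv g"]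
    by (simp add: piece_def word_inv_append)
  ultimately show ?case by blast
next
  case (eng h1 h2)
  then obtain L1 L2 where "valid_cert S R L1" "h1 = reduce (concat (map piece L1))"
    "valid_cert S R L2" "h2 = reduce (concat (map piece L2))" by blast
  moreover have "reduce (reduce (concat (map piece L1)) @ reduce (concat (map piece L2))) = reduce (concat (map piece (L1 @ L2)))"
    using reduce_append[of "concat (map piece L1)" "concat (map piece L2)"] by simp
  ultimately have "valid_cert S R (L1 @ L2) \<and> h1 \<otimes>\<^bsub>free_group S\<^esub> h2 = reduce (concat (map piece (L1 @ L2)))"
    by (auto simp: valid_cert_def)
  then show ?case by blast
qed

lemma cert_iff:
  assumes R: "R \<subseteq> lists (S \<times> UNIV)" and c: "c \<in> carrier (free_group S)"
  shows "c \<in> normal_closure_rel S R \<longleftrightarrow> (\<exists>L. valid_cert S R L \<and> c = reduce (concat (map piece L)))"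
  using cert_in[OF R] in_cert[OF R] by blast

section \<open>Transfer along the isomorphism\<close>

lemma word_eval_Nil[simp]: "word_eval G [] = \<one>\<^bsub>G\<^esub>"
  by (simp add: word_eval_def)

lemma word_eval_Cons: "word_eval G (x # u) = letter_eval G x \<otimes>\<^bsub>G\<^esub> word_eval G u"
  by (simp add: word_eval_def)

lemma iso_transfer:
  fixes G :: "('g, 'b) monoid_scheme" and S :: "'g set" and S' :: "'a set"
  assumes grp: "group G" and SG: "S \<subseteq> carrier G"
    and R: "R \<subseteq> lists (S' \<times> UNIV)"
    and hiso: "h \<in> iso G (FactGroup (free_group S') (normal_closure_rel S' R))"
    and ws: "\<And>s. s \<in> S \<Longrightarrow> ws s \<in> carrier (free_group S') \<and> h s = normal_closure_rel S' R #>\<^bsub>free_group S'\<^esub> ws s"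
    and u: "set u \<subseteq> S \<times> UNIV"
  shows "word_eval G u = \<one>\<^bsub>G\<^esub> \<longleftrightarrow>
     reduce (concat (map (\<lambda>x. if snd x then ws (fst x) else word_inv (ws (fst x))) u)) \<in> normal_closure_rel S' R"
proof -
  let ?F = "free_group S'" let ?N = "normal_closure_rel S' R" let ?Q = "FactGroup ?F ?N"
  define \<phi> where "\<phi> = (\<lambda>x::'g \<times> bool. if snd x then ws (fst x) else word_inv (ws (fst x)))"
  interpret N: normal ?N ?F using ncr_normal[OF R] .
  interpret GG: group G by (rule grp)
  have Qg: "group ?Q" by (rule N.factorgroup_is_group)
  have hom: "h \<in> hom G ?Q" and bij: "bij_betw h (carrier G) (carrier ?Q)" using hiso by (auto simp: iso_def)
  interpret gh: group_hom G ?Q h unfolding group_hom_def group_hom_axioms_def using grp Qg hom by simp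
  have Nsub: "?N \<subseteq> carrier ?F" using N.subset .
  have phic: "\<phi> x \<in> carrier ?F" if "fst x \<in> S" for x
    using ws[OF that] set_word_inv_sub[of "ws (fst x)" S'] reduced_word_inv[of "ws (fst x)"]
    by (auto simp: \<phi>_def)
  have le: "letter_eval G x \<in> carrier G \<and> h (letter_eval G x) = ?N #>\<^bsub>?F\<^esub> \<phi> x" if "fst x \<in> S" for x
  proof (cases "snd x")
    case True
    then show ?thesis using ws[OF that] SG that by (auto simp: letter_eval_def \<phi>_def)
  next
    case False
    have s: "fst x \<in> carrier G" using SG that by blast
    have hs: "h (fst x) \<in> carrier ?Q" using hom s by (auto simp: hom_def)
    have "h (inv\<^bsub>G\<^esub> (fst x)) = inv\<^bsub>?Q\<^esub> (h (fst x))" using gh.hom_inv[OF s] .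
    also have "\<dots> = set_inv\<^bsub>?F\<^esub> (h (fst x))" using N.inv_FactGroup[OF hs] .
    also have "\<dots> = ?N #>\<^bsub>?F\<^esub> inv\<^bsub>?F\<^esub> (ws (fst x))" using ws[OF that] N.rcos_inv by simp
    also have "\<dots> = ?N #>\<^bsub>?F\<^esub> \<phi> x" using free_inv[of "ws (fst x)" S'] ws[OF that] False by (simp add: \<phi>_def)
    finally show ?thesis using False s by (simp add: letter_eval_def)
  qed
  have main: "word_eval G v \<in> carrier G \<and> h (word_eval G v) = ?N #>\<^bsub>?F\<^esub> reduce (concat (map \<phi> v))"
    if "set v \<subseteq> S \<times> UNIV" for v
    using that
  proof (induction v)
    case Nil
    have "h \<one>\<^bsub>G\<^esub> = \<one>\<^bsub>?Q\<^esub>" by (rule gh.hom_one)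
    then show ?case using FG.coset_mult_one[OF Nsub] by simp
  next
    case (Cons x v)
    have x: "fst x \<in> S" using Cons.prems by auto
    have IH: "word_eval G v \<in> carrier G \<and> h (word_eval G v) = ?N #>\<^bsub>?F\<^esub> reduce (concat (map \<phi> v))"
      using Cons by auto
    have lx: "letter_eval G x \<in> carrier G" "h (letter_eval G x) = ?N #>\<^bsub>?F\<^esub> \<phi> x" using le[OF x] by auto
    have cv: "reduce (concat (map \<phi> v)) \<in> carrier ?F"
    proof -
      have "set (concat (map \<phi> v)) \<subseteq> S' \<times> UNIV" using phic Cons.prems by fastforce
      then show ?thesis by (rule reduce_in_carrier)
    qed
    have "h (word_eval G (x # v)) = h (letter_eval G x) \<otimes>\<^bsub>?Q\<^esub> h (word_eval G v)"
      unfolding word_eval_Cons using hom_mult[OF hom lx(1) conjunct1[OF IH]] .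
    also have "\<dots> = (?N #>\<^bsub>?F\<^esub> \<phi> x) <#>\<^bsub>?F\<^esub> (?N #>\<^bsub>?F\<^esub> reduce (concat (map \<phi> v)))"
      using lx IH by simp
    also have "\<dots> = ?N #>\<^bsub>?F\<^esub> (\<phi> x \<otimes>\<^bsub>?F\<^esub> reduce (concat (map \<phi> v)))"
      using N.rcos_sum[OF phic[OF x] cv] .
    also have "\<phi> x \<otimes>\<^bsub>?F\<^esub> reduce (concat (map \<phi> v)) = reduce (concat (map \<phi> (x # v)))"
      by (simp add: reduce_append_right)
    finally show ?case using lx IH unfolding word_eval_Cons by simp
  qed
  have cu: "reduce (concat (map \<phi> u)) \<in> carrier ?F"
  proof -
    have "set (concat (map \<phi> u)) \<subseteq> S' \<times> UNIV" using phic u by fastforce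
    then show ?thesis by (rule reduce_in_carrier)
  qed
  have wc: "word_eval G u \<in> carrier G" using main[OF u] by blast
  have inj: "inj_on h (carrier G)" using bij unfolding bij_betw_def by blast
  have "word_eval G u = \<one>\<^bsub>G\<^esub> \<longleftrightarrow> h (word_eval G u) = h \<one>\<^bsub>G\<^esub>"
    using inj_on_eq_iff[OF inj wc GG.one_closed] by blast
  also have "h (word_eval G u) = ?N #>\<^bsub>?F\<^esub> reduce (concat (map \<phi> u))"
    using main[OF u] by blast
  also have "h \<one>\<^bsub>G\<^esub> = ?N"
    using gh.hom_one by simp
  also have "(?N #>\<^bsub>?F\<^esub> reduce (concat (map \<phi> u)) = ?N) \<longleftrightarrow> reduce (concat (map \<phi> u)) \<in> ?N"
  proof
    assume "?N #>\<^bsub>?F\<^esub> reduce (concat (map \<phi> u)) = ?N"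
    then show "reduce (concat (map \<phi> u)) \<in> ?N" using FG.rcos_self[OF cu N.subgroup_axioms] by (simp only:)
  next
    assume "reduce (concat (map \<phi> u)) \<in> ?N"
    then show "?N #>\<^bsub>?F\<^esub> reduce (concat (map \<phi> u)) = ?N" using FG.coset_join2[OF cu N.subgroup_axioms] by blast
  qed
  finally show ?thesis unfolding \<phi>_def .
qed


lemma letter_code_inj: "letter_code x = letter_code y \<longleftrightarrow> x = y"
  by (cases x, cases y) (auto simp: letter_code_def)

lemma invc_letter_code: "invc (letter_code x) = letter_code (inv_letter x)"
  by (cases x) (simp add: invc_def letter_code_def inv_letter_def)

lemma lc_red_cons_map: "lc_red_cons (letter_code x) (map letter_code r) = map letter_code (red_cons x r)"
proof (cases r)
  case Nil then show ?thesis by simp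
next
  case (Cons y ys)
  have "(letter_code y = invc (letter_code x)) \<longleftrightarrow> y = inv_letter x"
    by (simp add: invc_letter_code letter_code_inj)
  then show ?thesis using Cons by simp
qed

lemma redc_map: "redc (map letter_code w) = map letter_code (reduce w)"
  by (induction w) (simp_all add: redc_def reduce_Cons lc_red_cons_map[symmetric])

lemma winvc_map: "rev (map invc (map letter_code w)) = map letter_code (word_inv w)"
  by (simp add: word_inv_def invc_letter_code rev_map)

lemma winvc_map': "rev (map (invc \<circ> letter_code) w) = map letter_code (word_inv w)"
  using winvc_map[of w] by simp

lemma map_letter_code_inj: "map letter_code u = map letter_code v \<longleftrightarrow> u = v"
  using inj_map_eq_map[of letter_code] inj_on_def letter_code_inj by (metis injI)

lemma list_decode_inj: "list_decode a = list_decode b \<longleftrightarrow> a = b"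
  by (metis list_decode_inverse)

lemma decode_letters:
  assumes "set cs \<subseteq> letter_code ` (S \<times> UNIV)"
  shows "\<exists>g. set g \<subseteq> S \<times> UNIV \<and> cs = map letter_code g"
  using assms
proof (induction cs)
  case Nil then show ?case by simp
next
  case (Cons c cs)
  then obtain x where x: "x \<in> S \<times> UNIV" "c = letter_code x" by auto
  obtain g where "set g \<subseteq> S \<times> UNIV" "cs = map letter_code g" using Cons by auto
  then show ?case using x by (intro exI[of _ "x # g"]) auto
qed

definition item_code :: "nat word \<times> nat word \<times> bool \<Rightarrow> nat" where
  "item_code p = (case p of (g, r, b) \<Rightarrow> prod_encode (list_encode (map letter_code g), prod_encode (word_code r, if b then 1 else 0)))"

lemma c_piece_item: "list_decode (c_piece (item_code p)) = map letter_code (piece p)"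
  by (cases p) (simp add: item_code_def c_piece_def piece_def word_code_def winvc_map')

definition OKc :: "nat set \<Rightarrow> (nat \<Rightarrow> nat \<Rightarrow> bool) \<Rightarrow> (nat \<Rightarrow> nat) \<Rightarrow> nat \<Rightarrow> nat \<Rightarrow> nat \<Rightarrow> bool" where
  "OKc LC Q P uc cc t \<longleftrightarrow> c_valid LC Q cc t \<noteq> 0 \<and> c_red (c_phis P uc) = c_red (c_pieces cc)"

lemma OKc_mono:
  assumes mono: "\<forall>n t t'. Q t n \<longrightarrow> t \<le> t' \<longrightarrow> Q t' n"
  shows "OKc LC Q P uc cc t \<Longrightarrow> t \<le> t' \<Longrightarrow> OKc LC Q P uc cc t'"
  unfolding OKc_def c_valid_eq using mono by blast

lemma OKc_sound:
  assumes R: "R \<subseteq> lists (S' \<times> UNIV)"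
    and QR: "\<forall>n. n \<in> word_code ` R \<longleftrightarrow> (\<exists>t. Q t n)"
    and phis: "list_decode (c_phis P uc) = map letter_code v"
    and ok: "OKc (letter_code ` (S' \<times> UNIV)) Q P uc cc t"
  shows "reduce v \<in> normal_closure_rel S' R"
proof -
  let ?LC = "letter_code ` (S' \<times> UNIV)"
  have val: "\<forall>it\<in>set (list_decode cc). set (list_decode (pfst it)) \<subseteq> ?LC \<and> Q t (pfst (psnd it))"
    using ok unfolding OKc_def c_valid_eq by blast
  have "\<exists>L. valid_cert S' R L \<and> map (\<lambda>it. list_decode (c_piece it)) its = map (\<lambda>p. map letter_code (piece p)) L"
    if "\<forall>it\<in>set its. set (list_decode (pfst it)) \<subseteq> ?LC \<and> Q t (pfst (psnd it))" for its
    using that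
  proof (induction its)
    case Nil then show ?case by (intro exI[of _ "[]"]) (simp add: valid_cert_def)
  next
    case (Cons it its)
    then obtain L where L: "valid_cert S' R L" "map (\<lambda>it. list_decode (c_piece it)) its = map (\<lambda>p. map letter_code (piece p)) L"
      by auto
    have h: "set (list_decode (pfst it)) \<subseteq> ?LC" "Q t (pfst (psnd it))" using Cons.prems by auto
    obtain g where g: "set g \<subseteq> S' \<times> UNIV" "list_decode (pfst it) = map letter_code g"
      using decode_letters[OF h(1)] by blast
    obtain r where r: "r \<in> R" "pfst (psnd it) = word_code r" using h(2) QR by blast
    let ?b = "psnd (psnd it) \<noteq> 0"
    have "list_decode (c_piece it) = map letter_code (piece (g, r, ?b))"
      using g r by (simp add: c_piece_def piece_def word_code_def winvc_map')
    moreover have "valid_cert S' R ((g, r, ?b) # L)" using L(1) g r by (simp add: valid_cert_def)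
    ultimately show ?case using L(2) by (intro exI[of _ "(g, r, ?b) # L"]) simp
  qed
  then obtain L where L: "valid_cert S' R L" "map (\<lambda>it. list_decode (c_piece it)) (list_decode cc) = map (\<lambda>p. map letter_code (piece p)) L"
    using val by blast
  have pc: "list_decode (c_pieces cc) = map letter_code (concat (map piece L))"
    unfolding c_pieces_eq using L(2) by (simp add: map_concat comp_def)
  have "list_decode (c_red (c_phis P uc)) = list_decode (c_red (c_pieces cc))"
    using ok unfolding OKc_def by simp
  then have "map letter_code (reduce v) = map letter_code (reduce (concat (map piece L)))"
    using phis pc by (simp add: redc_map)
  then have "reduce v = reduce (concat (map piece L))" using map_letter_code_inj by blast
  then show ?thesis using cert_in[OF R L(1)] by simp
qed

lemma OKc_complete:
  assumes R: "R \<subseteq> lists (S' \<times> UNIV)"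
    and QR: "\<forall>n. n \<in> word_code ` R \<longleftrightarrow> (\<exists>t. Q t n)"
    and mono: "\<forall>n t t'. Q t n \<longrightarrow> t \<le> t' \<longrightarrow> Q t' n"
    and phis: "list_decode (c_phis P uc) = map letter_code v"
    and v: "set v \<subseteq> S' \<times> UNIV"
    and inN: "reduce v \<in> normal_closure_rel S' R"
  shows "\<exists>cc T. \<forall>t\<ge>T. OKc (letter_code ` (S' \<times> UNIV)) Q P uc cc t"
proof -
  let ?LC = "letter_code ` (S' \<times> UNIV)"
  have vc: "reduce v \<in> carrier (free_group S')" using reduce_in_carrier[OF v] .
  obtain L where L: "valid_cert S' R L" "reduce v = reduce (concat (map piece L))"
    using in_cert[OF R inN] by blast
  define cc where "cc = list_encode (map item_code L)"
  have T: "\<exists>T. \<forall>t\<ge>T. \<forall>p\<in>set L'. Q t (word_code (fst (snd p)))" if "set L' \<subseteq> set L" for L'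
    using that
  proof (induction L')
    case Nil then show ?case by simp
  next
    case (Cons p L')
    then obtain T1 where T1: "\<forall>t\<ge>T1. \<forall>p\<in>set L'. Q t (word_code (fst (snd p)))" by auto
    have "fst (snd p) \<in> R" using Cons.prems L(1) by (auto simp: valid_cert_def)
    then obtain T2 where "Q T2 (word_code (fst (snd p)))" using QR by blast
    then have "\<forall>t\<ge>T2. Q t (word_code (fst (snd p)))" using mono by blast
    then show ?case using T1 by (intro exI[of _ "max T1 T2"]) auto
  qed
  obtain T where T: "\<forall>t\<ge>T. \<forall>p\<in>set L. Q t (word_code (fst (snd p)))" using T[of L] by blast
  have ok: "OKc ?LC Q P uc cc t" if "t \<ge> T" for t
  proof -
    have "c_valid ?LC Q cc t \<noteq> 0"
      unfolding c_valid_eq cc_def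
    proof
      fix it assume "it \<in> set (list_decode (list_encode (map item_code L)))"
      then obtain p where p: "p \<in> set L" "it = item_code p" by auto
      obtain g r b where gr: "p = (g, r, b)" by (cases p) auto
      have "set (fst p) \<subseteq> S' \<times> UNIV" using L(1) p(1) unfolding valid_cert_def by blast
      then have "set g \<subseteq> S' \<times> UNIV" using gr by simp
      then have "set (map letter_code g) \<subseteq> ?LC" by auto
      moreover have "Q t (word_code r)" using T that p gr by fastforce
      ultimately show "set (list_decode (pfst it)) \<subseteq> ?LC \<and> Q t (pfst (psnd it))"
        using p gr by (simp add: item_code_def)
    qed
    moreover have "list_decode (c_pieces cc) = map letter_code (concat (map piece L))"
      unfolding c_pieces_eq cc_def by (simp add: c_piece_item map_concat comp_def)
    then have "list_decode (c_red (c_phis P uc)) = list_decode (c_red (c_pieces cc))"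
      using phis L(2) by (simp add: redc_map)
    then have "c_red (c_phis P uc) = c_red (c_pieces cc)" using list_decode_inj by blast
    ultimately show ?thesis unfolding OKc_def by blast
  qed
  then show ?thesis by blast
qed


lemma factor_length[simp]: "length (factor x i n) = n"
  by (simp add: factor_def)

lemma factor_lists: "x \<in> full_shift A \<Longrightarrow> factor x i n \<in> lists A"
  by (auto simp: factor_def full_shift_def)

lemma factor_sub: "j + l \<le> n \<Longrightarrow> take l (drop j (factor x i n)) = factor x (i + int j) l"
  by (rule nth_equalityI) (auto simp: factor_def algebra_simps)

theorem proposition4:
  fixes G :: "('g, 'b) monoid_scheme" and S :: "'g set"
  assumes "group G"
    and "recursively_presented G"
    and "finite S" and "S \<subseteq> carrier G" and "generate G S = carrier G"
  shows "effective_subshift (S \<times> UNIV) (skeleton G S)"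
proof -
  obtain S' :: "nat set" and R where S': "finite S'" and R: "R \<subseteq> lists (S' \<times> UNIV)"
    and re: "re_set (word_code ` R)"
    and iso: "is_iso G (FactGroup (free_group S') (normal_closure_rel S' R))"
    using assms(2) unfolding recursively_presented_def by blast
  let ?F = "free_group S'" let ?N = "normal_closure_rel S' R" let ?Q = "FactGroup ?F ?N"
  obtain h where hiso: "h \<in> iso G ?Q" using iso unfolding is_iso_def by blast
  have hom: "h \<in> hom G ?Q" using hiso by (simp add: iso_def)
  define ws where "ws = (\<lambda>s. SOME w. w \<in> carrier ?F \<and> h s = ?N #>\<^bsub>?F\<^esub> w)"
  have wsP: "ws s \<in> carrier ?F \<and> h s = ?N #>\<^bsub>?F\<^esub> ws s" if s: "s \<in> S" for s
  proof -
    have "h s \<in> carrier ?Q" using hom s assms(4) by (auto simp: hom_def)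
    then have "\<exists>w. w \<in> carrier ?F \<and> h s = ?N #>\<^bsub>?F\<^esub> w" unfolding carrier_FactGroup by blast
    then show ?thesis unfolding ws_def by (rule someI_ex)
  qed
  define \<phi> where "\<phi> = (\<lambda>x::'g \<times> bool. if snd x then ws (fst x) else word_inv (ws (fst x)))"
  have triv: "word_eval G u = \<one>\<^bsub>G\<^esub> \<longleftrightarrow> reduce (concat (map \<phi> u)) \<in> ?N" if "set u \<subseteq> S \<times> UNIV" for u
    unfolding \<phi>_def using iso_transfer[OF assms(1) assms(4) R hiso wsP that] by blast
  have vS': "set (concat (map \<phi> u)) \<subseteq> S' \<times> UNIV" if "set u \<subseteq> S \<times> UNIV" for u
  proof -
    have "set (\<phi> x) \<subseteq> S' \<times> UNIV" if "x \<in> S \<times> UNIV" for x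
      using wsP[of "fst x"] that set_word_inv_sub[of "ws (fst x)" S'] by (auto simp: \<phi>_def)
    then show ?thesis using \<open>set u \<subseteq> S \<times> UNIV\<close> by fastforce
  qed
  obtain QR where QRiff: "\<forall>n. n \<in> word_code ` R \<longleftrightarrow> (\<exists>t. QR t n)"
    and QRmono: "\<forall>n t t'. QR t n \<longrightarrow> t \<le> t' \<longrightarrow> QR t' n"
    and QRrp: "rp (\<lambda>m. QR (pfst m) (psnd m))"
    using re_bounded[OF re] by blast
  obtain e :: "'g \<Rightarrow> nat" where e: "inj_on e S"
    using finite_imp_inj_to_nat_seg[OF assms(3)] by blast
  define code where "code = (\<lambda>x::'g \<times> bool. letter_code (e (fst x), snd x))"
  have injc: "inj_on code (S \<times> UNIV)"
    unfolding code_def inj_on_def using e letter_code_inj by (auto simp: inj_on_def)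
  define CA where "CA = code ` (S \<times> UNIV)"
  have finCA: "finite CA" unfolding CA_def using assms(3) by simp
  define LC where "LC = letter_code ` (S' \<times> UNIV)"
  have finLC: "finite LC" unfolding LC_def using S' by simp
  define dec where "dec = the_inv_into (S \<times> UNIV) code"
  have dec_code: "dec (code x) = x" if "x \<in> S \<times> UNIV" for x
    unfolding dec_def using the_inv_into_f_f[OF injc that] .
  have code_dec: "code (dec c) = c" "dec c \<in> S \<times> UNIV" if "c \<in> CA" for c
    using that f_the_inv_into_f[OF injc] the_inv_into_into[OF injc] unfolding CA_def dec_def by auto
  define P where "P = (\<lambda>c. if c \<in> CA then list_encode (map letter_code (\<phi> (dec c))) else 0)"
  have PR: "rec1 P" unfolding P_def by (rule rf_table[OF finCA])
  have phis: "list_decode (c_phis P (list_encode (map code u))) = map letter_code (concat (map \<phi> u))"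
    if "set u \<subseteq> S \<times> UNIV" for u
  proof -
    have "list_decode (P (code x)) = map letter_code (\<phi> x)" if "x \<in> S \<times> UNIV" for x
      using that dec_code[OF that] by (auto simp: P_def CA_def)
    then show ?thesis unfolding c_phis_eq using \<open>set u \<subseteq> S \<times> UNIV\<close>
      by (induction u) auto
  qed
  define Dc where "Dc = (\<lambda>n. c_allin CA n \<noteq> 0 \<and> (\<exists>i<Suc (c_len n). \<exists>l<Suc (c_len n). \<exists>cc<Suc (c_len n).
      0 < l \<and> i + l \<le> c_len n \<and> c_valid LC QR cc (c_len n) \<noteq> 0 \<and>
      c_red (c_phis P (c_take l (c_drop i n))) = c_red (c_pieces cc)))"
  have rpD: "rp Dc" unfolding Dc_def
    by (intro rp_conj rp_ne0 rp_bex rp_less rp_le rp_eq rf_c_allin[OF finCA] rf_c_valid[OF finLC QRrp]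
        rf_c_red rf_c_phis[OF PR] rf_c_pieces rf_c_take rf_c_drop rf_comp_c_len rf_add rf_Suc
        rf_pfst rf_psnd rf_id rf_const)
  define Forb where "Forb = {w \<in> lists (S \<times> UNIV). Dc (list_encode (map code w))}"
  have Dc_word: "Dc (list_encode (map code w)) \<longleftrightarrow> (\<exists>i l cc. i \<le> length w \<and> l \<le> length w \<and> cc \<le> length w \<and>
      0 < l \<and> i + l \<le> length w \<and> OKc LC QR P (list_encode (map code (take l (drop i w)))) cc (length w))"
    if w: "w \<in> lists (S \<times> UNIV)" for w
  proof -
    have all: "c_allin CA (list_encode (map code w)) \<noteq> 0" using w unfolding c_allin_eq CA_def by auto
    have tk: "c_take l (c_drop i (list_encode (map code w))) = list_encode (map code (take l (drop i w)))" for l i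
      by (rule iffD1[OF list_decode_inj]) (simp add: take_map drop_map)
    show ?thesis unfolding Dc_def OKc_def using all by (simp add: tk less_Suc_eq_le)
  qed
  have sound: "word_eval G u = \<one>\<^bsub>G\<^esub>" if u: "u \<in> lists (S \<times> UNIV)" and ok: "OKc LC QR P (list_encode (map code u)) cc t" for u cc t
  proof -
    have "reduce (concat (map \<phi> u)) \<in> ?N"
      using OKc_sound[OF R QRiff phis ok[unfolded LC_def]] u by auto
    then show ?thesis using triv u by auto
  qed
  have complete: "\<exists>cc T. \<forall>t\<ge>T. OKc LC QR P (list_encode (map code u)) cc t"
    if u: "u \<in> lists (S \<times> UNIV)" and tr: "word_eval G u = \<one>\<^bsub>G\<^esub>" for u
  proof -
    have su: "set u \<subseteq> S \<times> UNIV" using u by auto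
    have "reduce (concat (map \<phi> u)) \<in> ?N" using triv[OF su] tr by blast
    then show ?thesis unfolding LC_def using OKc_complete[OF R QRiff QRmono phis[OF su] vS'[OF su]] by blast
  qed
  have dec_set: "decidable_set ((\<lambda>w. list_encode (map code w)) ` Forb)"
  proof -
    have eq: "(\<lambda>w. list_encode (map code w)) ` Forb = {n. Dc n}"
    proof
      show "(\<lambda>w. list_encode (map code w)) ` Forb \<subseteq> {n. Dc n}" unfolding Forb_def by auto
    next
      show "{n. Dc n} \<subseteq> (\<lambda>w. list_encode (map code w)) ` Forb"
      proof
        fix n assume "n \<in> {n. Dc n}"
        then have D: "Dc n" by simp
        then have sub: "set (list_decode n) \<subseteq> CA" unfolding Dc_def c_allin_eq by blast
        define w where "w = map dec (list_decode n)"
        have "\<forall>c\<in>set (list_decode n). dec c \<in> S \<times> UNIV" using sub code_dec(2) by blast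
        then have "\<forall>y\<in>set w. y \<in> S \<times> UNIV" unfolding w_def by (simp only: set_map ball_simps)
        then have wl: "w \<in> lists (S \<times> UNIV)" by (rule in_listsI)
        have "map code w = list_decode n" unfolding w_def map_map
          by (rule map_idI) (use sub code_dec(1) in auto)
        then have "list_encode (map code w) = n" by simp
        then show "n \<in> (\<lambda>w. list_encode (map code w)) ` Forb" using wl D unfolding Forb_def by auto
      qed
    qed
    obtain f where "\<forall>n. ev f [n] (if Dc n then 1 else 0)" using rp_decide[OF rpD] by blast
    then have "\<forall>n. ev f [n] (if n \<in> {n. Dc n} then 1 else 0)" by simp
    then show ?thesis unfolding decidable_set_def eq by blast
  qed
  have shift_eq: "skeleton G S = shift_of (S \<times> UNIV) Forb"
  proof
    show "skeleton G S \<subseteq> shift_of (S \<times> UNIV) Forb"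
    proof
      fix x assume x: "x \<in> skeleton G S"
      then have xf: "x \<in> full_shift (S \<times> UNIV)" and nt: "\<forall>i n. n > 0 \<longrightarrow> word_eval G (factor x i n) \<noteq> \<one>\<^bsub>G\<^esub>"
        unfolding skeleton_def by auto
      have "factor x i n \<notin> Forb" for i n
      proof
        assume "factor x i n \<in> Forb"
        then have "Dc (list_encode (map code (factor x i n)))" unfolding Forb_def by blast
        then obtain j l cc where jl: "0 < l" "j + l \<le> n"
          and ok: "OKc LC QR P (list_encode (map code (take l (drop j (factor x i n))))) cc n"
          using Dc_word[OF factor_lists[OF xf]] by auto
        have "take l (drop j (factor x i n)) = factor x (i + int j) l" using factor_sub[OF jl(2)] .
        then have "word_eval G (factor x (i + int j) l) = \<one>\<^bsub>G\<^esub>"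
          using sound[OF _ ok] factor_lists[OF xf] by simp
        then show False using nt jl(1) by blast
      qed
      then show "x \<in> shift_of (S \<times> UNIV) Forb" unfolding shift_of_def using xf by blast
    qed
  next
    show "shift_of (S \<times> UNIV) Forb \<subseteq> skeleton G S"
    proof
      fix x assume x: "x \<in> shift_of (S \<times> UNIV) Forb"
      then have xf: "x \<in> full_shift (S \<times> UNIV)" and nf: "\<forall>i n. factor x i n \<notin> Forb"
        unfolding shift_of_def by auto
      have "word_eval G (factor x i n) \<noteq> \<one>\<^bsub>G\<^esub>" if n: "n > 0" for i n
      proof
        assume tr: "word_eval G (factor x i n) = \<one>\<^bsub>G\<^esub>"
        obtain cc T where cT: "\<forall>t\<ge>T. OKc LC QR P (list_encode (map code (factor x i n))) cc t"
          using complete[OF factor_lists[OF xf] tr] by blast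
        define Lr where "Lr = n + cc + T"
        have tk: "take n (drop 0 (factor x i Lr)) = factor x i n"
          using factor_sub[of 0 n Lr x i] unfolding Lr_def by simp
        have "OKc LC QR P (list_encode (map code (take n (drop 0 (factor x i Lr))))) cc Lr"
          unfolding tk using cT unfolding Lr_def by simp
        then have "\<exists>j l c. j \<le> length (factor x i Lr) \<and> l \<le> length (factor x i Lr) \<and> c \<le> length (factor x i Lr) \<and>
            0 < l \<and> j + l \<le> length (factor x i Lr) \<and> OKc LC QR P (list_encode (map code (take l (drop j (factor x i Lr))))) c (length (factor x i Lr))"
          using n by (intro exI[of _ 0] exI[of _ n] exI[of _ cc]) (simp add: Lr_def)
        then have "Dc (list_encode (map code (factor x i Lr)))"
          using Dc_word[OF factor_lists[OF xf]] by blast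
        then have "factor x i Lr \<in> Forb" unfolding Forb_def using factor_lists[OF xf] by blast
        then show False using nf by blast
      qed
      then show "x \<in> skeleton G S" unfolding skeleton_def using xf by blast
    qed
  qed
  have "Forb \<subseteq> lists (S \<times> UNIV)" unfolding Forb_def by blast
  then show ?thesis unfolding effective_subshift_def using injc dec_set shift_eq by blast
qed


end
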